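(* Let $\sigma,\tau,\bar\sigma,\bar\tau$ satisfy the Standing Hypothesis and let $m\ge1$ and $0\le x\le m$ be integers. Then $$\{\sigma,m,m+1,\tau\,|\,\bar\sigma,x,\bar\tau\}-\{\sigma,m+1,m,\tau\,|\,\bar\sigma,x,\bar\tau\} =-\{\sigma\backslash\sigma_s,m+\sigma_s,m+1,\tau\,|\,\bar\sigma\backslash\bar\sigma_s,m+1,\bar\tau\}+\{\sigma,m+1,m+\tau_1,\tau\backslash\tau_1\,|\,\bar\sigma,m+1,\bar\tau\backslash\bar\tau_1\},$$ where the first term on the right is omitted if $s=0$ and the second is omitted if $t=0$.
   Context: Overlap notation: for $\alpha=(\alpha_1,\dots,\alpha_L)$ with $\alpha_i\ge1$ and $\beta=(\beta_1,\dots,\beta_{L-1})$ with $0\le\beta_i\le\min\{\alpha_i,\alpha_{i+1}\}$, $(\alpha\,|\,\beta)$ is the skew diagram $\lambda/\mu$ (boxes $(i,j)$ with $\mu_i<j\le\lambda_i$, identified up to deleting empty rows/columns) with $L$ nonempty rows, $\lambda_i-\mu_i=\alpha_i$, $\lambda_{i+1}-\mu_i=\beta_i$ (row $i$ has $\alpha_i$ boxes, rows $i,i+1$ share $\beta_i$ columns); $\{\alpha\,|\,\beta\}=s_{\lambda/\mu}$ is its skew Schur function (generating function of semistandard Young tableaux of that shape). Commas denote concatenation of sequences. Standing Hypothesis: $\sigma=(\sigma_1,\dots,\sigma_s)$, $\tau=(\tau_1,\dots,\tau_t)$ compositions, $s,t\ge0$; $\bar\sigma,\bar\tau$ sequences of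 non-negative integers of lengths $s,t$; $\bar\sigma_s=1$ if $s>0$; $\bar\tau_1=1$ if $t>0$; $\bar\sigma_i\le\min\{\sigma_i,\sigma_{i+1}\}$ ($1\le i<s$), $\bar\tau_i\le\min\{\tau_i,\tau_{i-1}\}$ ($1<i\le t$). $\sigma\backslash\sigma_s$ removes the last part of $\sigma$, $\tau\backslash\tau_1$ removes the first part of $\tau$, and similarly for $\bar\sigma\backslash\bar\sigma_s$, $\bar\tau\backslash\bar\tau_1$. *)

theory Defs
  imports Main
begin

text \<open>Rows are indexed 0..L-1 (top to bottom, English
convention), columns by integers. rend a b i is lambda_i (right end of row i), normalised
so that rend a b 0 = 0; then mu_i = lambda_i - alpha_i and lambda_(i+1) = mu_i + beta_i.\<close>

fun rend :: "nat list \<Rightarrow> nat list \<Rightarrow> nat \<Rightarrow> int" where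
  "rend a b 0 = 0"
| "rend a b (Suc i) = rend a b i - int (a ! i) + int (b ! i)"

definition cells :: "nat list \<Rightarrow> nat list \<Rightarrow> (nat \<times> int) set" where
  "cells a b = {(i, j). i < length a \<and> rend a b i - int (a ! i) < j \<and> j \<le> rend a b i}"

definition ssyt :: "nat \<Rightarrow> (nat \<times> int) set \<Rightarrow> ((nat \<times> int) \<Rightarrow> nat) set" where
  "ssyt n D = {T. (\<forall>c\<in>D. T c < n) \<and> (\<forall>c. c \<notin> D \<longrightarrow> T c = 0)
     \<and> (\<forall>i j j'. (i, j) \<in> D \<and> (i, j') \<in> D \<and> j < j' \<longrightarrow> T (i, j) \<le> T (i, j'))
     \<and> (\<forall>i i' j. (i, j) \<in> D \<and> (i', j) \<in> D \<and> i < i' \<longrightarrow> T (i, j) < T (i', j))}"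

text \<open>{alpha | beta} = skew Schur function, specialised to n variables y 0, ..., y (n-1).
Equality of symmetric functions = equality of these for all n and all values y in
all commutative rings.\<close>

definition skew_schur :: "nat \<Rightarrow> (nat \<Rightarrow> 'a::comm_ring_1) \<Rightarrow> nat list \<Rightarrow> nat list \<Rightarrow> 'a" where
  "skew_schur n y a b = (\<Sum>T\<in>ssyt n (cells a b). \<Prod>c\<in>cells a b. y (T c))"

end

theory Submission
  imports Defs
begin


definition Row :: "nat \<Rightarrow> nat \<Rightarrow> nat list set" where
  "Row n k = {w. length w = k \<and> sorted w \<and> (\<forall>v\<in>set w. v < n)}"

lemma finite_Row: "finite (Row n k)"
  by (rule finite_subset[OF _ finite_lists_length_eq[of "{..<n}" k]]) (auto simp: Row_def)

definition wt :: "(nat \<Rightarrow> 'a::comm_ring_1) \<Rightarrow> nat list \<Rightarrow> 'a" where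
  "wt y w = prod_list (map y w)"

lemma wt_append[simp]: "wt y (xs @ ys) = wt y xs * wt y ys"
  by (simp add: wt_def)

definition strictd :: "nat \<Rightarrow> nat list \<Rightarrow> nat list \<Rightarrow> bool" where
  "strictd d A B = (\<forall>i. i < length A \<longrightarrow> i + d < length B \<longrightarrow> A!i < B!(i+d))"

lemma sorted_hd_le: "sorted xs \<Longrightarrow> x \<in> set xs \<Longrightarrow> hd xs \<le> x"
  by (cases xs) auto

lemma sorted_le_last: "sorted xs \<Longrightarrow> x \<in> set xs \<Longrightarrow> x \<le> last xs"
  by (induction xs) auto

lemma sorted_app: "sorted xs \<Longrightarrow> sorted ys \<Longrightarrow> (xs \<noteq> [] \<Longrightarrow> ys \<noteq> [] \<Longrightarrow> last xs \<le> hd ys)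
   \<Longrightarrow> sorted (xs @ ys)"
  unfolding sorted_append
  by (metis empty_iff list.set(1) order.trans sorted_hd_le sorted_le_last)

lemma last_take_nth: "0 < j \<Longrightarrow> j \<le> length xs \<Longrightarrow> last (take j xs) = xs!(j-1)"
proof -
  assume j: "0 < j" "j \<le> length xs"
  then have ne: "take j xs \<noteq> []" by auto
  have "last (take j xs) = take j xs ! (length (take j xs) - 1)" by (rule last_conv_nth[OF ne])
  also have "\<dots> = xs!(j-1)" using j by (simp add: min_def)
  finally show ?thesis .
qed

lemma Row_iff: "w \<in> Row n k \<longleftrightarrow> length w = k \<and> sorted w \<and> (\<forall>v\<in>set w. v < n)"
  by (simp add: Row_def)

definition fi :: "nat \<Rightarrow> nat list \<Rightarrow> nat list \<Rightarrow> nat" where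
  "fi d A B = (LEAST i. i < length A \<and> i + d < length B \<and> B!(i+d) \<le> A!i)"

definition gi :: "nat \<Rightarrow> nat list \<Rightarrow> nat list \<Rightarrow> nat" where
  "gi d C D = (LEAST i. i < length D \<longrightarrow> C!(i+d) \<le> D!i)"

lemma fi_props:
  assumes "\<not> strictd d A B"
  shows "fi d A B < length A" "fi d A B + d < length B" "B!(fi d A B + d) \<le> A!(fi d A B)"
    "\<And>t. t < fi d A B \<Longrightarrow> A!t < B!(t+d)"
proof -
  have ex: "\<exists>i. i < length A \<and> i + d < length B \<and> B!(i+d) \<le> A!i"
    using assms by (auto simp: strictd_def not_less)
  have 1: "fi d A B < length A \<and> fi d A B + d < length B \<and> B!(fi d A B + d) \<le> A!(fi d A B)"
    unfolding fi_def by (rule LeastI_ex[OF ex])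
  then show "fi d A B < length A" "fi d A B + d < length B" "B!(fi d A B + d) \<le> A!(fi d A B)" by auto
  fix t assume t: "t < fi d A B"
  have "\<not> (t < length A \<and> t + d < length B \<and> B!(t+d) \<le> A!t)"
    using not_less_Least[OF t[unfolded fi_def]] by blast
  then show "A!t < B!(t+d)" using t 1 by auto
qed

lemma gi_props:
  shows "gi d C D \<le> length D" "gi d C D < length D \<Longrightarrow> C!(gi d C D + d) \<le> D!(gi d C D)"
    "\<And>t. t < gi d C D \<Longrightarrow> D!t < C!(t+d)"
proof -
  have w: "length D < length D \<longrightarrow> C!(length D+d) \<le> D!(length D)" by simp
  show "gi d C D \<le> length D" unfolding gi_def by (rule Least_le) simp
  have "gi d C D < length D \<longrightarrow> C!(gi d C D + d) \<le> D!(gi d C D)"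
    unfolding gi_def by (rule LeastI[of "\<lambda>i. i < length D \<longrightarrow> C!(i+d) \<le> D!i", OF w])
  then show "gi d C D < length D \<Longrightarrow> C!(gi d C D + d) \<le> D!(gi d C D)" by blast
  fix t assume t: "t < gi d C D"
  have "gi d C D \<le> length D" unfolding gi_def by (rule Least_le) simp
  with t have tl: "t < length D" by simp
  have "\<not> (t < length D \<longrightarrow> C!(t+d) \<le> D!t)"
    using not_less_Least[OF t[unfolded gi_def]] by blast
  then show "D!t < C!(t+d)" by auto
qed

definition fw :: "nat \<Rightarrow> nat list \<times> nat list \<Rightarrow> nat list \<times> nat list" where
  "fw d p = (let A = fst p; B = snd p; i = fi d A B in
     (take (i+d+1) B @ drop i A, take i A @ drop (i+d+1) B))"

definition gw :: "nat \<Rightarrow> nat list \<times> nat list \<Rightarrow> nat list \<times> nat list" where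
  "gw d p = (let C = fst p; D = snd p; i = gi d C D in
     (take i D @ drop (i+d+1) C, take (i+d+1) C @ drop i D))"

lemma jt_bij:
  fixes la fb lb :: "nat \<Rightarrow> bool" and y :: "nat \<Rightarrow> 'a::comm_ring_1"
  assumes k: "1 \<le> k" and dl: "d < l"
    and H: "(l \<le> k + d \<and> (\<forall>v. lb v)) \<or> (l = k + d + 1 \<and> (\<forall>u v. la u \<longrightarrow> lb v \<longrightarrow> u < v))"
  shows "(\<Sum>p\<in>{(A,B). A \<in> Row n k \<and> B \<in> Row n l \<and> la (last A) \<and> fb (hd B) \<and> lb (last B) \<and> \<not> strictd d A B}.
            wt y (fst p) * wt y (snd p))
       = (\<Sum>p\<in>{(C,D). C \<in> Row n (k+d+1) \<and> D \<in> Row n (l-d-1) \<and> fb (hd C) \<and> la (last C) \<and> lb (last D)}.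
            wt y (fst p) * wt y (snd p))"
proof (rule sum.reindex_bij_witness[where i="gw d" and j="fw d"])
  fix p assume "p \<in> {(A,B). A \<in> Row n k \<and> B \<in> Row n l \<and> la (last A) \<and> fb (hd B) \<and> lb (last B) \<and> \<not> strictd d A B}"
  then obtain A B where p: "p = (A,B)" and A: "A \<in> Row n k" and B: "B \<in> Row n l" and laA: "la (last A)"
    and fbB: "fb (hd B)" and lbB: "lb (last B)" and ns: "\<not> strictd d A B" by auto
  define i where "i = fi d A B"
  have lA: "length A = k" and sA: "sorted A" and nA: "\<forall>v\<in>set A. v < n" using A by (auto simp: Row_iff)
  have lB: "length B = l" and sB: "sorted B" and nB: "\<forall>v\<in>set B. v < n" using B by (auto simp: Row_iff)
  have ik: "i < k" and idl: "i + d < l" and viol: "B!(i+d) \<le> A!i" and pre: "\<And>t. t < i \<Longrightarrow> A!t < B!(t+d)"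
    using fi_props[OF ns] lA lB unfolding i_def by auto
  define C where "C = take (i+d+1) B @ drop i A"
  define D where "D = take i A @ drop (i+d+1) B"
  have fwp: "fw d p = (C, D)" by (simp add: fw_def p C_def D_def i_def Let_def)
  have lC: "length C = k + d + 1" using ik idl lA lB by (simp add: C_def)
  have lD: "length D = l - d - 1" using ik idl lA lB by (simp add: D_def)
  have sC: "sorted C" unfolding C_def
  proof (rule sorted_app)
    show "sorted (take (i + d + 1) B)" using sB by (simp add: sorted_wrt_take)
    show "sorted (drop i A)" using sA by (simp add: sorted_wrt_drop)
    show "last (take (i + d + 1) B) \<le> hd (drop i A)"
      using viol ik idl lA lB by (simp add: last_take_nth hd_drop_conv_nth)
  qed
  have sD: "sorted D" unfolding D_def
  proof (rule sorted_app)
    show "sorted (take i A)" using sA by (simp add: sorted_wrt_take)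
    show "sorted (drop (i+d+1) B)" using sB by (simp add: sorted_wrt_drop)
    assume ne1: "take i A \<noteq> []" and ne2: "drop (i + d + 1) B \<noteq> []"
    then have i0: "0 < i" and il: "i + d + 1 < l" using lB by auto
    have "A!(i-1) < B!(i-1+d)" using pre[of "i-1"] i0 by simp
    also have "\<dots> \<le> B!(i+d+1)" using sB il lB by (intro sorted_nth_mono) auto
    finally show "last (take i A) \<le> hd (drop (i + d + 1) B)"
      using i0 ik lA il lB by (simp add: last_take_nth hd_drop_conv_nth)
  qed
  have nC: "\<forall>v\<in>set C. v < n" using nA nB by (auto simp: C_def dest: in_set_takeD in_set_dropD)
  have nD: "\<forall>v\<in>set D. v < n" using nA nB by (auto simp: D_def dest: in_set_takeD in_set_dropD)
  have "B \<noteq> []" using lB dl by auto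
  then have fbC: "fb (hd C)" using fbB ik lA by (simp add: C_def)
  have laC: "la (last C)" using laA ik lA by (simp add: C_def)
  have lbD: "lb (last D)"
    using H
  proof
    assume "l \<le> k + d \<and> (\<forall>v. lb v)" then show ?thesis by simp
  next
    assume h: "l = k + d + 1 \<and> (\<forall>u v. la u \<longrightarrow> lb v \<longrightarrow> u < v)"
    then have "i + d + 1 < l" using ik by simp
    then show ?thesis using lbB lB by (simp add: D_def)
  qed
  show "fw d p \<in> {(C,D). C \<in> Row n (k+d+1) \<and> D \<in> Row n (l-d-1) \<and> fb (hd C) \<and> la (last C) \<and> lb (last D)}"
    using fwp lC lD sC sD nC nD fbC laC lbD by (simp add: Row_iff)
  show "wt y (fst (fw d p)) * wt y (snd (fw d p)) = wt y (fst p) * wt y (snd p)"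
  proof -
    have "wt y A = wt y (take i A) * wt y (drop i A)"
      by (metis append_take_drop_id wt_append)
    moreover have "wt y B = wt y (take (i+d+1) B) * wt y (drop (i+d+1) B)"
      by (metis append_take_drop_id wt_append)
    ultimately have "wt y C * wt y D = wt y A * wt y B" by (simp add: C_def D_def ac_simps)
    then show ?thesis unfolding fwp using p by simp
  qed
  have lD': "l - d - 1 = length D" using lD by simp
  have gi_eq: "gi d C D = i" unfolding gi_def
  proof (rule Least_equality)
    show "i < length D \<longrightarrow> C ! (i + d) \<le> D ! i"
    proof
      assume "i < length D"
      then have "i + d + 1 < l" using lD idl by simp
      have "C!(i+d) = B!(i+d)" using idl lB by (simp add: C_def nth_append)
      also have "\<dots> \<le> B!(i+d+1)" using sB \<open>i + d + 1 < l\<close> lB by (intro sorted_nth_mono) auto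
      also have "\<dots> = D!i" using ik lA \<open>i + d + 1 < l\<close> lB by (simp add: D_def nth_append)
      finally show "C ! (i + d) \<le> D ! i" .
    qed
  next
    fix t assume h: "t < length D \<longrightarrow> C ! (t + d) \<le> D ! t"
    show "i \<le> t"
    proof (rule ccontr)
      assume "\<not> i \<le> t" then have ti: "t < i" by simp
      then have "t < length D" using lD idl by simp
      have "D!t = A!t" using ti ik lA by (simp add: D_def nth_append)
      moreover have "C!(t+d) = B!(t+d)" using ti idl lB by (simp add: C_def nth_append)
      ultimately show False using h pre[OF ti] \<open>t < length D\<close> by simp
    qed
  qed
  show "gw d (fw d p) = p"
  proof -
    have "take i D = take i A" using ik lA by (simp add: D_def)
    moreover have "drop (i+d+1) C = drop i A" using idl lB by (simp add: C_def)
    moreover have "take (i+d+1) C = take (i+d+1) B" using idl lB by (simp add: C_def)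
    moreover have "drop i D = drop (i+d+1) B" using ik lA by (simp add: D_def)
    ultimately show ?thesis unfolding fwp gw_def Let_def fst_conv snd_conv gi_eq using p by simp
  qed
next
  fix p assume "p \<in> {(C,D). C \<in> Row n (k+d+1) \<and> D \<in> Row n (l-d-1) \<and> fb (hd C) \<and> la (last C) \<and> lb (last D)}"
  then obtain C D where p: "p = (C,D)" and C: "C \<in> Row n (k+d+1)" and D: "D \<in> Row n (l-d-1)"
    and fbC: "fb (hd C)" and laC: "la (last C)" and lbD: "lb (last D)" by auto
  have lC: "length C = k+d+1" and sC: "sorted C" and nC: "\<forall>v\<in>set C. v < n" using C by (auto simp: Row_iff)
  have lD: "length D = l-d-1" and sD: "sorted D" and nD: "\<forall>v\<in>set D. v < n" using D by (auto simp: Row_iff)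
  define i where "i = gi d C D"
  have il': "i \<le> length D" and atI: "i < length D \<Longrightarrow> C!(i+d) \<le> D!i" and pre: "\<And>t. t < i \<Longrightarrow> D!t < C!(t+d)"
    using gi_props[where d=d and C=C and D=D] unfolding i_def by auto
  have ik: "i < k"
    using H
  proof
    assume "l \<le> k + d \<and> (\<forall>v. lb v)" then show ?thesis using il' lD k by linarith
  next
    assume h: "l = k + d + 1 \<and> (\<forall>u v. la u \<longrightarrow> lb v \<longrightarrow> u < v)"
    then have lDk: "length D = k" using lD by simp
    show ?thesis
    proof (rule ccontr)
      assume "\<not> i < k"
      then have "i = k" using il' lDk by simp
      then have "D!(k-1) < C!(k-1+d)" using pre[of "k-1"] k by simp
      also have "\<dots> \<le> C!(k+d)" using sC lC by (intro sorted_nth_mono) auto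
      also have "C!(k+d) = last C" using lC by (subst last_conv_nth) auto
      moreover have "last D = D!(k-1)" using lDk k by (subst last_conv_nth) auto
      ultimately have "last D < last C" by simp
      moreover have "last C < last D" using h laC lbD by blast
      ultimately show False by simp
    qed
  qed
  have idl: "i + d < l" using il' lD dl by simp
  define A where "A = take i D @ drop (i+d+1) C"
  define B where "B = take (i+d+1) C @ drop i D"
  have gwp: "gw d p = (A, B)" by (simp add: gw_def p A_def B_def i_def Let_def)
  have lA: "length A = k" using ik il' lC by (simp add: A_def)
  have lB: "length B = l" using idl il' lC lD dl ik by (simp add: B_def)
  have sA: "sorted A" unfolding A_def
  proof (rule sorted_app)
    show "sorted (take i D)" using sD by (simp add: sorted_wrt_take)
    show "sorted (drop (i+d+1) C)" using sC by (simp add: sorted_wrt_drop)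
    assume ne1: "take i D \<noteq> []" and ne2: "drop (i + d + 1) C \<noteq> []"
    then have i0: "0 < i" by auto
    have "D!(i-1) < C!(i-1+d)" using pre[of "i-1"] i0 by simp
    also have "\<dots> \<le> C!(i+d+1)" using sC ik lC by (intro sorted_nth_mono) auto
    finally show "last (take i D) \<le> hd (drop (i + d + 1) C)"
      using i0 il' ik lC by (simp add: last_take_nth hd_drop_conv_nth)
  qed
  have sB: "sorted B" unfolding B_def
  proof (rule sorted_app)
    show "sorted (take (i+d+1) C)" using sC by (simp add: sorted_wrt_take)
    show "sorted (drop i D)" using sD by (simp add: sorted_wrt_drop)
    assume ne1: "take (i+d+1) C \<noteq> []" and ne2: "drop i D \<noteq> []"
    then have iD: "i < length D" by auto
    show "last (take (i+d+1) C) \<le> hd (drop i D)"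
      using atI[OF iD] iD ik lC by (simp add: last_take_nth hd_drop_conv_nth)
  qed
  have nA: "\<forall>v\<in>set A. v < n" using nC nD by (auto simp: A_def dest: in_set_takeD in_set_dropD)
  have nB: "\<forall>v\<in>set B. v < n" using nC nD by (auto simp: B_def dest: in_set_takeD in_set_dropD)
  have laA: "la (last A)" using laC ik lC by (simp add: A_def)
  have "C \<noteq> []" using lC by auto
  then have fbB: "fb (hd B)" using fbC lC by (simp add: B_def)
  have lbB: "lb (last B)"
  proof (cases "i < length D")
    case True then show ?thesis using lbD by (simp add: B_def)
  next
    case False
    then have "i = length D" using il' by simp
    have "l \<le> k + d \<and> (\<forall>v. lb v)" using H ik lD \<open>i = length D\<close> by auto
    then show ?thesis by simp
  qed
  have Ai: "A!i = C!(i+d+1)" using il' ik lC by (simp add: A_def nth_append)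
  have Bi: "B!(i+d) = C!(i+d)" using lC ik by (simp add: B_def nth_append)
  have violA: "B!(i+d) \<le> A!i" using Ai Bi sC ik lC by (simp add: sorted_nth_mono)
  have ns: "\<not> strictd d A B" unfolding strictd_def using violA ik lA idl lB by (auto intro!: exI[of _ i])
  show "gw d p \<in> {(A,B). A \<in> Row n k \<and> B \<in> Row n l \<and> la (last A) \<and> fb (hd B) \<and> lb (last B) \<and> \<not> strictd d A B}"
    using gwp lA lB sA sB nA nB laA fbB lbB ns by (simp add: Row_iff)
  have fi_eq: "fi d A B = i" unfolding fi_def
  proof (rule Least_equality)
    show "i < length A \<and> i + d < length B \<and> B ! (i + d) \<le> A ! i" using ik lA idl lB violA by simp
  next
    fix t assume h: "t < length A \<and> t + d < length B \<and> B ! (t + d) \<le> A ! t"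
    show "i \<le> t"
    proof (rule ccontr)
      assume "\<not> i \<le> t" then have ti: "t < i" by simp
      have "A!t = D!t" using ti il' by (simp add: A_def nth_append)
      moreover have "B!(t+d) = C!(t+d)" using ti ik lC by (simp add: B_def nth_append)
      ultimately show False using h pre[OF ti] by simp
    qed
  qed
  show "fw d (gw d p) = p"
  proof -
    have "take (i+d+1) B = take (i+d+1) C" using ik lC by (simp add: B_def)
    moreover have "drop i A = drop (i+d+1) C" using il' by (simp add: A_def)
    moreover have "take i A = take i D" using il' by (simp add: A_def)
    moreover have "drop (i+d+1) B = drop i D" using ik lC by (simp add: B_def)
    ultimately show ?thesis unfolding gwp fw_def Let_def fst_conv snd_conv fi_eq using p by simp
  qed
qed

definition Rs :: "nat \<Rightarrow> (nat \<Rightarrow> 'a::comm_ring_1) \<Rightarrow> nat \<Rightarrow> (nat list \<Rightarrow> bool) \<Rightarrow> 'a" where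
  "Rs n y k P = (\<Sum>w\<in>{w\<in>Row n k. P w}. wt y w)"

lemma pair_prod:
  "(\<Sum>p\<in>{(A,B). A \<in> Row n k \<and> B \<in> Row n l \<and> P A \<and> Q B}. wt y (fst p) * wt y (snd p))
    = Rs n y k P * Rs n y l Q"
proof -
  have "{(A,B). A \<in> Row n k \<and> B \<in> Row n l \<and> P A \<and> Q B} = {A\<in>Row n k. P A} \<times> {B\<in>Row n l. Q B}"
    by auto
  then show ?thesis
    by (simp add: Rs_def sum_product sum.cartesian_product case_prod_beta)
qed

lemma finite_pairs: "finite {(A,B). A \<in> Row n k \<and> B \<in> Row n l \<and> R A B}"
  by (rule finite_subset[OF _ finite_cartesian_product[OF finite_Row[of n k] finite_Row[of n l]]]) auto

lemma jt:
  fixes la fb lb :: "nat \<Rightarrow> bool" and y :: "nat \<Rightarrow> 'a::comm_ring_1"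
  assumes k: "1 \<le> k" and dl: "d < l"
    and H: "(l \<le> k + d \<and> (\<forall>v. lb v)) \<or> (l = k + d + 1 \<and> (\<forall>u v. la u \<longrightarrow> lb v \<longrightarrow> u < v))"
  shows "(\<Sum>p\<in>{(A,B). A \<in> Row n k \<and> B \<in> Row n l \<and> la (last A) \<and> fb (hd B) \<and> lb (last B) \<and> strictd d A B}.
            wt y (fst p) * wt y (snd p))
       = Rs n y k (\<lambda>A. la (last A)) * Rs n y l (\<lambda>B. fb (hd B) \<and> lb (last B))
         - Rs n y (k+d+1) (\<lambda>C. fb (hd C) \<and> la (last C)) * Rs n y (l-d-1) (\<lambda>D. lb (last D))"
proof -
  let ?f = "\<lambda>p. wt y (fst p) * wt y (snd p)"
  let ?S = "{(A,B). A \<in> Row n k \<and> B \<in> Row n l \<and> la (last A) \<and> fb (hd B) \<and> lb (last B) \<and> strictd d A B}"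
  let ?V = "{(A,B). A \<in> Row n k \<and> B \<in> Row n l \<and> la (last A) \<and> fb (hd B) \<and> lb (last B) \<and> \<not> strictd d A B}"
  let ?All = "{(A,B). A \<in> Row n k \<and> B \<in> Row n l \<and> la (last A) \<and> (fb (hd B) \<and> lb (last B))}"
  have "?All = ?S \<union> ?V" by auto
  moreover have "?S \<inter> ?V = {}" by auto
  ultimately have "sum ?f ?All = sum ?f ?S + sum ?f ?V"
    by (simp add: sum.union_disjoint finite_pairs)
  moreover have "sum ?f ?All = Rs n y k (\<lambda>A. la (last A)) * Rs n y l (\<lambda>B. fb (hd B) \<and> lb (last B))"
    by (rule pair_prod)
  moreover have "sum ?f ?V = Rs n y (k+d+1) (\<lambda>C. fb (hd C) \<and> la (last C)) * Rs n y (l-d-1) (\<lambda>D. lb (last D))"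
  proof -
    have "sum ?f ?V = sum ?f {(C,D). C \<in> Row n (k+d+1) \<and> D \<in> Row n (l-d-1) \<and> (fb (hd C) \<and> la (last C)) \<and> lb (last D)}"
      unfolding jt_bij[OF k dl H] by (rule sum.cong) auto
    also have "\<dots> = Rs n y (k+d+1) (\<lambda>C. fb (hd C) \<and> la (last C)) * Rs n y (l-d-1) (\<lambda>D. lb (last D))"
      by (rule pair_prod)
    finally show ?thesis .
  qed
  ultimately show ?thesis by (simp add: algebra_simps)
qed

lemma dsum_pairs:
  "finite S \<Longrightarrow> finite T \<Longrightarrow> (\<Sum>a\<in>S. \<Sum>b\<in>T. if c a b then f a b else 0)
     = (\<Sum>p\<in>{(a,b). a\<in>S \<and> b\<in>T \<and> c a b}. f (fst p) (snd p))"
proof -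
  assume fS: "finite S" and fT: "finite T"
  have "(\<Sum>a\<in>S. \<Sum>b\<in>T. if c a b then f a b else 0) = (\<Sum>p\<in>S\<times>T. if c (fst p) (snd p) then f (fst p) (snd p) else 0)"
    by (simp add: sum.cartesian_product case_prod_beta)
  also have "\<dots> = (\<Sum>p\<in>{p\<in>S\<times>T. c (fst p) (snd p)}. f (fst p) (snd p))"
    using fS fT by (simp add: sum.inter_filter)
  also have "{p\<in>S\<times>T. c (fst p) (snd p)} = {(a,b). a\<in>S \<and> b\<in>T \<and> c a b}" by auto
  finally show ?thesis .
qed

definition compat :: "nat list \<Rightarrow> nat list \<Rightarrow> nat \<Rightarrow> bool" where
  "compat r r' c = (\<forall>j<c. r!j < r'!(length r' - c + j))"

lemma compat_strictd: "c \<le> length r \<Longrightarrow> c \<le> length r' \<Longrightarrow> compat r r' c = strictd (length r' - c) r r'"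
  unfolding compat_def strictd_def
  apply (rule iffI)
   apply (auto simp: add.commute)[1]
  apply clarify
  subgoal for j by (drule spec[of _ j]) (auto simp: add.commute)
  done

lemma Rs_cong: "(\<And>w. w \<in> Row n k \<Longrightarrow> P w = Q w) \<Longrightarrow> Rs n y k P = Rs n y k Q"
  unfolding Rs_def by (rule sum.cong) auto

lemma Rs_split: "Rs n y k P = Rs n y k (\<lambda>w. P w \<and> Q w) + Rs n y k (\<lambda>w. P w \<and> \<not> Q w)"
proof -
  have "{w\<in>Row n k. P w} = {w\<in>Row n k. P w \<and> Q w} \<union> {w\<in>Row n k. P w \<and> \<not> Q w}" by auto
  moreover have "finite {w\<in>Row n k. P w \<and> Q w}" "finite {w\<in>Row n k. P w \<and> \<not> Q w}"
    using finite_Row by auto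
  ultimately show ?thesis unfolding Rs_def by (subst sum.union_disjoint[symmetric]) auto
qed

definition F1 :: "nat \<Rightarrow> (nat \<Rightarrow> 'a::comm_ring_1) \<Rightarrow> nat \<Rightarrow> nat \<Rightarrow> nat \<Rightarrow> nat \<Rightarrow> 'a" where
  "F1 n y m x lo hi = (\<Sum>P\<in>Row n m. \<Sum>Q\<in>Row n (m+1).
     if lo \<le> last P \<and> compat P Q x \<and> hd Q < hi then wt y P * wt y Q else 0)"

definition F2 :: "nat \<Rightarrow> (nat \<Rightarrow> 'a::comm_ring_1) \<Rightarrow> nat \<Rightarrow> nat \<Rightarrow> nat \<Rightarrow> nat \<Rightarrow> 'a" where
  "F2 n y m x lo hi = (\<Sum>P\<in>Row n (m+1). \<Sum>Q\<in>Row n m.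
     if lo \<le> last P \<and> compat P Q x \<and> hd Q < hi then wt y P * wt y Q else 0)"

definition G1 :: "nat \<Rightarrow> (nat \<Rightarrow> 'a::comm_ring_1) \<Rightarrow> nat \<Rightarrow> nat \<Rightarrow> nat \<Rightarrow> 'a" where
  "G1 n y m lo hi = (\<Sum>E\<in>Row n m. \<Sum>P\<in>Row n (m+1).
     if last E < lo \<and> (\<forall>j<m. E!j < P!j) \<and> lo \<le> last P \<and> hd P < hi then wt y E * wt y P else 0)"

definition G2 :: "nat \<Rightarrow> (nat \<Rightarrow> 'a::comm_ring_1) \<Rightarrow> nat \<Rightarrow> nat \<Rightarrow> nat \<Rightarrow> 'a" where
  "G2 n y m lo hi = (\<Sum>P\<in>Row n (m+1). \<Sum>X\<in>Row n m.
     if hi \<le> hd X \<and> (\<forall>j<m. P!(Suc j) < X!j) \<and> lo \<le> last P \<and> hd P < hi then wt y P * wt y X else 0)"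

lemma F1_formula:
  assumes m: "1 \<le> m" and x: "x \<le> m"
  shows "F1 n y m x lo hi = Rs n y m (\<lambda>P. lo \<le> last P) * Rs n y (m+1) (\<lambda>Q. hd Q < hi)
     - (if x = 0 then 0 else Rs n y (2*m+2-x) (\<lambda>C. hd C < hi \<and> lo \<le> last C) * Rs n y (x-1) (\<lambda>D. True))"
proof -
  have "F1 n y m x lo hi = (\<Sum>p\<in>{(A,B). A \<in> Row n m \<and> B \<in> Row n (m+1) \<and> (lo \<le> last A \<and> compat A B x \<and> hd B < hi)}.
      wt y (fst p) * wt y (snd p))"
    unfolding F1_def by (rule dsum_pairs[OF finite_Row finite_Row])
  also have "\<dots> = (\<Sum>p\<in>{(A,B). A \<in> Row n m \<and> B \<in> Row n (m+1) \<and> (\<lambda>v. lo \<le> v) (last A) \<and> (\<lambda>v. v < hi) (hd B) \<and> (\<lambda>v. True) (last B) \<and> strictd (m+1-x) A B}.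
      wt y (fst p) * wt y (snd p))"
    using x by (intro sum.cong refl) (auto simp: compat_strictd Row_iff)
  finally have eq: "F1 n y m x lo hi = \<dots>" .
  show ?thesis
  proof (cases "x = 0")
    case True
    have "F1 n y m x lo hi = (\<Sum>p\<in>{(A,B). A \<in> Row n m \<and> B \<in> Row n (m+1) \<and> lo \<le> last A \<and> hd B < hi}.
      wt y (fst p) * wt y (snd p))"
      unfolding eq using True by (intro sum.cong refl) (auto simp: strictd_def Row_iff)
    also have "\<dots> = Rs n y m (\<lambda>P. lo \<le> last P) * Rs n y (m+1) (\<lambda>Q. hd Q < hi)"
      by (rule pair_prod)
    finally show ?thesis using True by simp
  next
    case False
    have "F1 n y m x lo hi = Rs n y m (\<lambda>A. (\<lambda>v. lo \<le> v) (last A)) * Rs n y (m+1) (\<lambda>B. (\<lambda>v. v < hi) (hd B) \<and> (\<lambda>v. True) (last B))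
         - Rs n y (m+(m+1-x)+1) (\<lambda>C. (\<lambda>v. v < hi) (hd C) \<and> (\<lambda>v. lo \<le> v) (last C)) * Rs n y (m+1-(m+1-x)-1) (\<lambda>D. (\<lambda>v. True) (last D))"
      unfolding eq using m x False by (intro jt) auto
    moreover have "m+(m+1-x)+1 = 2*m+2-x" "m+1-(m+1-x)-1 = x - 1" using x by auto
    ultimately show ?thesis using False by simp
  qed
qed

lemma F2_formula:
  assumes m: "1 \<le> m" and x: "x \<le> m"
  shows "F2 n y m x lo hi = Rs n y (m+1) (\<lambda>P. lo \<le> last P) * Rs n y m (\<lambda>Q. hd Q < hi)
     - (if x = 0 then 0 else Rs n y (2*m+2-x) (\<lambda>C. hd C < hi \<and> lo \<le> last C) * Rs n y (x-1) (\<lambda>D. True))"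
proof -
  have "F2 n y m x lo hi = (\<Sum>p\<in>{(A,B). A \<in> Row n (m+1) \<and> B \<in> Row n m \<and> (lo \<le> last A \<and> compat A B x \<and> hd B < hi)}.
      wt y (fst p) * wt y (snd p))"
    unfolding F2_def by (rule dsum_pairs[OF finite_Row finite_Row])
  also have "\<dots> = (\<Sum>p\<in>{(A,B). A \<in> Row n (m+1) \<and> B \<in> Row n m \<and> (\<lambda>v. lo \<le> v) (last A) \<and> (\<lambda>v. v < hi) (hd B) \<and> (\<lambda>v. True) (last B) \<and> strictd (m-x) A B}.
      wt y (fst p) * wt y (snd p))"
    using x by (intro sum.cong refl) (auto simp: compat_strictd Row_iff)
  finally have eq: "F2 n y m x lo hi = \<dots>" .
  show ?thesis
  proof (cases "x = 0")
    case True
    have "F2 n y m x lo hi = (\<Sum>p\<in>{(A,B). A \<in> Row n (m+1) \<and> B \<in> Row n m \<and> lo \<le> last A \<and> hd B < hi}.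
      wt y (fst p) * wt y (snd p))"
      unfolding eq using True by (intro sum.cong refl) (auto simp: strictd_def Row_iff)
    also have "\<dots> = Rs n y (m+1) (\<lambda>P. lo \<le> last P) * Rs n y m (\<lambda>Q. hd Q < hi)"
      by (rule pair_prod)
    finally show ?thesis using True by simp
  next
    case False
    have e1: "(m+1)+(m-x)+1 = 2*m+2-x" and e2: "m-(m-x)-1 = x - 1" using x by auto
    have "F2 n y m x lo hi = Rs n y (m+1) (\<lambda>A. (\<lambda>v. lo \<le> v) (last A)) * Rs n y m (\<lambda>B. (\<lambda>v. v < hi) (hd B) \<and> (\<lambda>v. True) (last B))
         - Rs n y (2*m+2-x) (\<lambda>C. (\<lambda>v. v < hi) (hd C) \<and> (\<lambda>v. lo \<le> v) (last C)) * Rs n y (x-1) (\<lambda>D. (\<lambda>v. True) (last D))"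
      unfolding eq e1[symmetric] e2[symmetric] using m x False by (intro jt) auto
    then show ?thesis using False by simp
  qed
qed

lemma G1_formula:
  assumes m: "1 \<le> m"
  shows "G1 n y m lo hi = Rs n y m (\<lambda>A. last A < lo) * Rs n y (m+1) (\<lambda>B. hd B < hi \<and> lo \<le> last B)
     - Rs n y (m+1) (\<lambda>C. hd C < hi \<and> last C < lo) * Rs n y m (\<lambda>D. lo \<le> last D)"
proof -
  have "G1 n y m lo hi = (\<Sum>p\<in>{(A,B). A \<in> Row n m \<and> B \<in> Row n (m+1) \<and> (last A < lo \<and> (\<forall>j<m. A!j < B!j) \<and> lo \<le> last B \<and> hd B < hi)}.
      wt y (fst p) * wt y (snd p))"
    unfolding G1_def by (rule dsum_pairs[OF finite_Row finite_Row])
  also have "\<dots> = (\<Sum>p\<in>{(A,B). A \<in> Row n m \<and> B \<in> Row n (m+1) \<and> (\<lambda>v. v < lo) (last A) \<and> (\<lambda>v. v < hi) (hd B) \<and> (\<lambda>v. lo \<le> v) (last B) \<and> strictd 0 A B}.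
      wt y (fst p) * wt y (snd p))"
    by (intro sum.cong refl) (auto simp: strictd_def Row_iff)
  also have "\<dots> = Rs n y m (\<lambda>A. (\<lambda>v. v < lo) (last A)) * Rs n y (m+1) (\<lambda>B. (\<lambda>v. v < hi) (hd B) \<and> (\<lambda>v. lo \<le> v) (last B))
         - Rs n y (m+0+1) (\<lambda>C. (\<lambda>v. v < hi) (hd C) \<and> (\<lambda>v. v < lo) (last C)) * Rs n y (m+1-0-1) (\<lambda>D. (\<lambda>v. lo \<le> v) (last D))"
    using m by (intro jt) auto
  finally show ?thesis by simp
qed

definition rc :: "nat \<Rightarrow> nat list \<Rightarrow> nat list" where
  "rc n w = rev (map (\<lambda>v. n - Suc v) w)"

lemma rc_length[simp]: "length (rc n w) = length w" by (simp add: rc_def)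

lemma rc_nth: "j < length w \<Longrightarrow> rc n w ! j = n - Suc (w ! (length w - Suc j))"
  by (simp add: rc_def rev_nth)

lemma rc_hd: "w \<noteq> [] \<Longrightarrow> hd (rc n w) = n - Suc (last w)"
  by (simp add: rc_def hd_rev last_map)

lemma rc_last: "w \<noteq> [] \<Longrightarrow> last (rc n w) = n - Suc (hd w)"
  by (simp add: rc_def last_rev hd_map)

lemma rc_rc: "\<forall>v\<in>set w. v < n \<Longrightarrow> rc n (rc n w) = w"
  by (induction w) (auto simp: rc_def rev_map)

lemma rc_Row: "w \<in> Row n k \<Longrightarrow> rc n w \<in> Row n k"
proof -
  assume w: "w \<in> Row n k"
  then have l: "length w = k" and s: "sorted w" and b: "\<forall>v\<in>set w. v < n" by (auto simp: Row_iff)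
  have "sorted (rc n w)" unfolding sorted_iff_nth_mono
  proof (intro allI impI)
    fix i j assume ij: "i \<le> j" "j < length (rc n w)"
    then have "w ! (length w - Suc j) \<le> w ! (length w - Suc i)"
      using s by (intro sorted_nth_mono) auto
    then show "rc n w ! i \<le> rc n w ! j" using ij by (simp add: rc_nth)
  qed
  moreover have "\<forall>v\<in>set (rc n w). v < n" using b by (auto simp: rc_def)
  ultimately show ?thesis using l by (simp add: Row_iff)
qed

lemma wt_rc: "wt y (rc n w) = wt (\<lambda>v. y (n - Suc v)) w"
  by (simp add: wt_def rc_def rev_map[symmetric] comp_def)

lemma wt_rc2: "\<forall>v\<in>set w. v < n \<Longrightarrow> wt (\<lambda>v. y (n - Suc v)) (rc n w) = wt y w"
proof -
  assume b: "\<forall>v\<in>set w. v < n"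
  have "wt (\<lambda>v. y (n - Suc v)) (rc n w) = wt (\<lambda>v. y (n - Suc (n - Suc v))) w" by (rule wt_rc)
  also have "\<dots> = wt y w" unfolding wt_def using b by (intro arg_cong[where f=prod_list] map_cong) auto
  finally show ?thesis .
qed

lemma Rs_dual: "Rs n (\<lambda>v. y (n - Suc v)) k P = Rs n y k (\<lambda>w. P (rc n w))"
  unfolding Rs_def
proof (rule sym, rule sum.reindex_bij_witness[where i="rc n" and j="rc n"])
  fix a assume a: "a \<in> {w \<in> Row n k. P (rc n w)}"
  then have b: "\<forall>v\<in>set a. v < n" by (auto simp: Row_iff)
  show "rc n (rc n a) = a" using rc_rc[OF b] .
  show "rc n a \<in> {w \<in> Row n k. P w}" using a rc_Row by auto
  show "wt (\<lambda>v. y (n - Suc v)) (rc n a) = wt y a" using wt_rc2[OF b] .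
next
  fix b assume bb: "b \<in> {w \<in> Row n k. P w}"
  then have bd: "\<forall>v\<in>set b. v < n" by (auto simp: Row_iff)
  show "rc n (rc n b) = b" using rc_rc[OF bd] .
  show "rc n b \<in> {w \<in> Row n k. P (rc n w)}" using bb rc_Row rc_rc[OF bd] by auto
qed

lemma Row_bound: "w \<in> Row n k \<Longrightarrow> v \<in> set w \<Longrightarrow> v < n"
  by (auto simp: Row_iff)

lemma Row_ne: "w \<in> Row n k \<Longrightarrow> 1 \<le> k \<Longrightarrow> w \<noteq> []"
  by (auto simp: Row_iff)

lemma Row_hd_bound: "w \<in> Row n k \<Longrightarrow> 1 \<le> k \<Longrightarrow> hd w < n"
  using Row_bound Row_ne hd_in_set by blast

lemma Row_last_bound: "w \<in> Row n k \<Longrightarrow> 1 \<le> k \<Longrightarrow> last w < n"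
  using Row_bound Row_ne last_in_set by blast

lemma Row_nth_bound: "w \<in> Row n k \<Longrightarrow> j < k \<Longrightarrow> w!j < n"
  using Row_bound nth_mem by (metis Row_iff)

lemma rc_L1: "w \<in> Row n k \<Longrightarrow> 1 \<le> k \<Longrightarrow> (last (rc n w) < n - t) = (t \<le> hd w)"
  using Row_ne[of w n k] Row_hd_bound[of w n k] by (simp add: rc_last) linarith

lemma rc_L2: "w \<in> Row n k \<Longrightarrow> 1 \<le> k \<Longrightarrow> (n - t \<le> last (rc n w)) = (hd w < t)"
  using Row_ne[of w n k] Row_hd_bound[of w n k] by (simp add: rc_last) linarith

lemma rc_L3: "w \<in> Row n k \<Longrightarrow> 1 \<le> k \<Longrightarrow> (hd (rc n w) < n - t) = (t \<le> last w)"
  using Row_ne[of w n k] Row_last_bound[of w n k] by (simp add: rc_hd) linarith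

lemma G2_dual:
  assumes m: "1 \<le> m"
  shows "G2 n y m lo hi = G1 n (\<lambda>v. y (n - Suc v)) m (n - hi) (n - lo)"
proof -
  let ?y' = "\<lambda>v. y (n - Suc v)"
  have "G2 n y m lo hi = (\<Sum>p\<in>{(A,B). A \<in> Row n (m+1) \<and> B \<in> Row n m \<and> (hi \<le> hd B \<and> (\<forall>j<m. A!(Suc j) < B!j) \<and> lo \<le> last A \<and> hd A < hi)}.
      wt y (fst p) * wt y (snd p))"
    unfolding G2_def by (rule dsum_pairs[OF finite_Row finite_Row])
  also have "\<dots> = (\<Sum>p\<in>{(A,B). A \<in> Row n m \<and> B \<in> Row n (m+1) \<and> (last A < n - hi \<and> (\<forall>j<m. A!j < B!j) \<and> n - hi \<le> last B \<and> hd B < n - lo)}.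
      wt ?y' (fst p) * wt ?y' (snd p))"
  proof (rule sum.reindex_bij_witness[where j="\<lambda>(P,X). (rc n X, rc n P)" and i="\<lambda>(E,P). (rc n P, rc n E)"])
    fix a assume a: "a \<in> {(A,B). A \<in> Row n (m+1) \<and> B \<in> Row n m \<and> (hi \<le> hd B \<and> (\<forall>j<m. A!(Suc j) < B!j) \<and> lo \<le> last A \<and> hd A < hi)}"
    then obtain P X where aPX: "a = (P,X)" and P: "P \<in> Row n (m+1)" and X: "X \<in> Row n m" and c1: "hi \<le> hd X"
      and c2: "\<forall>j<m. P!(Suc j) < X!j" and c3: "lo \<le> last P" and c4: "hd P < hi" by auto
    have bP: "\<forall>v\<in>set P. v < n" and bX: "\<forall>v\<in>set X. v < n" using P X by (auto simp: Row_iff)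
    have lP: "length P = m+1" and lX: "length X = m" using P X by (auto simp: Row_iff)
    have neP: "P \<noteq> []" and neX: "X \<noteq> []" using lP lX m by auto
    show "(case (case a of (P, X) \<Rightarrow> (rc n X, rc n P)) of (E, P) \<Rightarrow> (rc n P, rc n E)) = a"
      using aPX rc_rc[OF bP] rc_rc[OF bX] by simp
    have hX: "hd X < n" using X m by (rule Row_hd_bound)
    have hP: "hd P < n" "last P < n" using P m by (auto intro: Row_hd_bound Row_last_bound)
    have d2: "\<forall>j<m. rc n X ! j < rc n P ! j"
    proof (intro allI impI)
      fix j assume j: "j < m"
      have "P!(Suc (m - Suc j)) < X!(m - Suc j)" using c2 j by simp
      moreover have "Suc (m - Suc j) = m - j" using j by simp
      moreover have "X!(m - Suc j) < n" using X j by (intro Row_nth_bound) auto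
      ultimately have "P!(m-j) < X!(m - Suc j)" "X!(m - Suc j) < n" by auto
      then show "rc n X ! j < rc n P ! j" using j lP lX by (simp add: rc_nth)
    qed
    show "(case a of (P, X) \<Rightarrow> (rc n X, rc n P)) \<in> {(A,B). A \<in> Row n m \<and> B \<in> Row n (m+1) \<and> (last A < n - hi \<and> (\<forall>j<m. A!j < B!j) \<and> n - hi \<le> last B \<and> hd B < n - lo)}"
      using aPX rc_Row[OF P] rc_Row[OF X] d2 c1 c3 c4 hX hP neP neX by (auto simp: rc_hd rc_last)
    show "wt ?y' (fst (case a of (P, X) \<Rightarrow> (rc n X, rc n P))) * wt ?y' (snd (case a of (P, X) \<Rightarrow> (rc n X, rc n P)))
        = wt y (fst a) * wt y (snd a)"
      using aPX wt_rc2[OF bP, where y=y] wt_rc2[OF bX, where y=y] by (simp add: mult.commute)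
  next
    fix b assume b: "b \<in> {(A,B). A \<in> Row n m \<and> B \<in> Row n (m+1) \<and> (last A < n - hi \<and> (\<forall>j<m. A!j < B!j) \<and> n - hi \<le> last B \<and> hd B < n - lo)}"
    then obtain E P where bEP: "b = (E,P)" and E: "E \<in> Row n m" and P: "P \<in> Row n (m+1)" and c1: "last E < n - hi"
      and c2: "\<forall>j<m. E!j < P!j" and c3: "n - hi \<le> last P" and c4: "hd P < n - lo" by auto
    have bP: "\<forall>v\<in>set P. v < n" and bE: "\<forall>v\<in>set E. v < n" using P E by (auto simp: Row_iff)
    have lP: "length P = m+1" and lE: "length E = m" using P E by (auto simp: Row_iff)
    have neP: "P \<noteq> []" and neE: "E \<noteq> []" using lP lE m by auto
    show "(case (case b of (E, P) \<Rightarrow> (rc n P, rc n E)) of (P, X) \<Rightarrow> (rc n X, rc n P)) = b"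
      using bEP rc_rc[OF bP] rc_rc[OF bE] by simp
    have hE: "hd E < n" "last E < n" using E m by (auto intro: Row_hd_bound Row_last_bound)
    have hP: "hd P < n" "last P < n" using P m by (auto intro: Row_hd_bound Row_last_bound)
    have d2: "\<forall>j<m. rc n P ! Suc j < rc n E ! j"
    proof (intro allI impI)
      fix j assume j: "j < m"
      have "E!(m - Suc j) < P!(m - Suc j)" using c2 j by simp
      moreover have "P!(m - Suc j) < n" using P j by (intro Row_nth_bound) auto
      ultimately show "rc n P ! Suc j < rc n E ! j" using j lP lE by (simp add: rc_nth)
    qed
    show "(case b of (E, P) \<Rightarrow> (rc n P, rc n E)) \<in> {(A,B). A \<in> Row n (m+1) \<and> B \<in> Row n m \<and> (hi \<le> hd B \<and> (\<forall>j<m. A!(Suc j) < B!j) \<and> lo \<le> last A \<and> hd A < hi)}"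
      using bEP rc_Row[OF P] rc_Row[OF E] d2 c1 c3 c4 hE hP neP neE by (auto simp: rc_hd rc_last)
  qed
  also have "\<dots> = G1 n ?y' m (n - hi) (n - lo)"
    unfolding G1_def by (rule dsum_pairs[OF finite_Row finite_Row, symmetric])
  finally show ?thesis .
qed

lemma local_identity:
  assumes m: "1 \<le> m" and x: "x \<le> m"
  shows "F1 n y m x lo hi - F2 n y m x lo hi = G2 n y m lo hi - G1 n y m lo hi"
proof -
  let ?y' = "\<lambda>v. y (n - Suc v)"
  define a1 where "a1 = Rs n y m (\<lambda>P. lo \<le> last P)"
  define a0 where "a0 = Rs n y m (\<lambda>P. last P < lo)"
  define b where "b = Rs n y m (\<lambda>P. hd P < hi)"
  define z where "z = Rs n y m (\<lambda>P. hi \<le> hd P)"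
  define g where "g = Rs n y (m+1) (\<lambda>P. hd P < hi \<and> lo \<le> last P)"
  define c where "c = Rs n y (m+1) (\<lambda>P. hd P < hi \<and> last P < lo)"
  define e where "e = Rs n y (m+1) (\<lambda>P. lo \<le> last P \<and> hi \<le> hd P)"
  have s1: "Rs n y (m+1) (\<lambda>Q. hd Q < hi) = g + c"
    unfolding g_def c_def by (subst Rs_split[where Q="\<lambda>P. lo \<le> last P"]) (simp add: not_le)
  have s2: "Rs n y (m+1) (\<lambda>Q. lo \<le> last Q) = g + e"
    unfolding g_def e_def by (subst Rs_split[where Q="\<lambda>P. hd P < hi"]) (simp add: not_less conj_commute)
  have s3: "a1 + a0 = z + b"
  proof -
    have "Rs n y m (\<lambda>P. True) = a1 + a0" unfolding a1_def a0_def
      by (subst Rs_split[where Q="\<lambda>P. lo \<le> last P"]) (simp add: not_le)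
    moreover have "Rs n y m (\<lambda>P. True) = z + b" unfolding z_def b_def
      by (subst Rs_split[where Q="\<lambda>P. hi \<le> hd P"]) (simp add: not_le)
    ultimately show ?thesis by simp
  qed
  have "F1 n y m x lo hi - F2 n y m x lo hi = a1 * (g + c) - (g + e) * b"
    unfolding F1_formula[OF m x] F2_formula[OF m x] s1 s2 a1_def b_def by simp
  moreover have "G1 n y m lo hi = a0 * g - c * a1"
    unfolding G1_formula[OF m] a0_def g_def c_def a1_def by simp
  moreover have "G2 n y m lo hi = z * g - e * b"
  proof -
    have "G2 n y m lo hi = Rs n ?y' m (\<lambda>A. last A < n - hi) * Rs n ?y' (m+1) (\<lambda>B. hd B < n - lo \<and> n - hi \<le> last B)
       - Rs n ?y' (m+1) (\<lambda>C. hd C < n - lo \<and> last C < n - hi) * Rs n ?y' m (\<lambda>D. n - hi \<le> last D)"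
      unfolding G2_dual[OF m] G1_formula[OF m] ..
    also have "Rs n ?y' m (\<lambda>A. last A < n - hi) = z"
      unfolding Rs_dual z_def
      by (rule Rs_cong) (use m in \<open>simp add: rc_L1 rc_L2 rc_L3 conj_commute\<close>)
    also have "Rs n ?y' (m+1) (\<lambda>B. hd B < n - lo \<and> n - hi \<le> last B) = g"
      unfolding Rs_dual g_def
      by (rule Rs_cong) (use m in \<open>simp add: rc_L1 rc_L2 rc_L3 conj_commute\<close>)
    also have "Rs n ?y' (m+1) (\<lambda>C. hd C < n - lo \<and> last C < n - hi) = e"
      unfolding Rs_dual e_def
      by (rule Rs_cong) (use m in \<open>simp add: rc_L1 rc_L2 rc_L3 conj_commute\<close>)
    also have "Rs n ?y' m (\<lambda>D. n - hi \<le> last D) = b"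
      unfolding Rs_dual b_def
      by (rule Rs_cong) (use m in \<open>simp add: rc_L1 rc_L2 rc_L3 conj_commute\<close>)
    finally show ?thesis .
  qed
  moreover have "a1 * (g + c) - (g + e) * b = (z * g - e * b) - (a0 * g - c * a1)"
  proof -
    have "a1 * (g + c) - (g + e) * b - ((z * g - e * b) - (a0 * g - c * a1)) = g * (a1 + a0 - (z + b))"
      by (simp add: algebra_simps)
    also have "\<dots> = 0" using s3 by simp
    finally show ?thesis by simp
  qed
  ultimately show ?thesis by simp
qed



definition WS :: "nat \<Rightarrow> nat list \<Rightarrow> nat list \<Rightarrow> nat list list set" where
  "WS n a b = {ws. length ws = length a \<and> (\<forall>i<length a. ws!i \<in> Row n (a!i))
      \<and> (\<forall>i. Suc i < length a \<longrightarrow> compat (ws!i) (ws!Suc i) (b!i))}"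

definition wtl :: "(nat \<Rightarrow> 'a::comm_ring_1) \<Rightarrow> nat list list \<Rightarrow> 'a" where
  "wtl y ws = prod_list (map (wt y) ws)"

definition okab :: "nat list \<Rightarrow> nat list \<Rightarrow> bool" where
  "okab a b = (\<forall>i. Suc i < length a \<longrightarrow> b!i \<le> a!i \<and> b!i \<le> a!Suc i)"

definition st :: "nat list \<Rightarrow> nat list \<Rightarrow> nat \<Rightarrow> int" where
  "st a b i = rend a b i - int (a!i) + 1"

lemma cells_iff: "(i,j) \<in> cells a b \<longleftrightarrow> i < length a \<and> st a b i \<le> j \<and> j < st a b i + int (a!i)"
  by (auto simp: cells_def st_def)

lemma rend_Suc: "rend a b (Suc i) = rend a b i - int (a!i) + int (b!i)" by simp

lemma rend_mono:
  assumes ok: "okab a b" and ii: "i \<le> i'" and il: "i' < length a"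
  shows "rend a b i' \<le> rend a b i \<and> st a b i' \<le> st a b i"
  using ii il
proof (induction i' rule: dec_induct)
  case base then show ?case by simp
next
  case (step k)
  have "b!k \<le> a!k" "b!k \<le> a!Suc k" using ok step.hyps step.prems unfolding okab_def by auto
  then show ?case using step by (auto simp: st_def)
qed

definition Phi :: "nat list \<Rightarrow> nat list \<Rightarrow> (nat \<times> int \<Rightarrow> nat) \<Rightarrow> nat list list" where
  "Phi a b T = map (\<lambda>i. map (\<lambda>t. T (i, st a b i + int t)) [0..<a!i]) [0..<length a]"

definition Psi :: "nat list \<Rightarrow> nat list \<Rightarrow> nat list list \<Rightarrow> (nat \<times> int \<Rightarrow> nat)" where
  "Psi a b ws = (\<lambda>(i,j). if (i,j) \<in> cells a b then ws!i!nat (j - st a b i) else 0)"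

lemma Phi_nth: "i < length a \<Longrightarrow> t < a!i \<Longrightarrow> Phi a b T ! i ! t = T (i, st a b i + int t)"
  by (simp add: Phi_def)

lemma Phi_len: "length (Phi a b T) = length a" "i < length a \<Longrightarrow> length (Phi a b T ! i) = a!i"
  by (auto simp: Phi_def)

lemma ssyt_iff: "T \<in> ssyt n D \<longleftrightarrow> (\<forall>c\<in>D. T c < n) \<and> (\<forall>c. c \<notin> D \<longrightarrow> T c = 0)
     \<and> (\<forall>i j j'. (i, j) \<in> D \<and> (i, j') \<in> D \<and> j < j' \<longrightarrow> T (i, j) \<le> T (i, j'))
     \<and> (\<forall>i i' j. (i, j) \<in> D \<and> (i', j) \<in> D \<and> i < i' \<longrightarrow> T (i, j) < T (i', j))"
  by (simp add: ssyt_def)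

lemma Phi_WS:
  assumes T: "T \<in> ssyt n (cells a b)" and ok: "okab a b"
  shows "Phi a b T \<in> WS n a b"
proof -
  note TT = T[unfolded ssyt_iff]
  have rows: "Phi a b T ! i \<in> Row n (a!i)" if i: "i < length a" for i
  proof -
    have "sorted (Phi a b T ! i)" unfolding sorted_iff_nth_mono
    proof (intro allI impI)
      fix t t' assume tt: "t \<le> t'" "t' < length (Phi a b T ! i)"
      then have t': "t' < a!i" using Phi_len(2)[OF i] by simp
      show "Phi a b T ! i ! t \<le> Phi a b T ! i ! t'"
      proof (cases "t = t'")
        case True then show ?thesis by simp
      next
        case False
        then have "t < t'" using tt by simp
        then show ?thesis using TT t' i by (simp add: Phi_nth cells_iff)
      qed
    qed
    moreover have "\<forall>v\<in>set (Phi a b T ! i). v < n"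
    proof
      fix v assume "v \<in> set (Phi a b T ! i)"
      then obtain t where t: "t < a!i" "v = Phi a b T ! i ! t" using Phi_len(2)[OF i] by (auto simp: in_set_conv_nth)
      then show "v < n" using TT i by (simp add: Phi_nth cells_iff)
    qed
    ultimately show ?thesis using Phi_len(2)[OF i] by (simp add: Row_iff)
  qed
  have comp: "compat (Phi a b T ! i) (Phi a b T ! Suc i) (b!i)" if i: "Suc i < length a" for i
    unfolding compat_def
  proof (intro allI impI)
    fix j assume j: "j < b!i"
    have ba: "b!i \<le> a!i" "b!i \<le> a!Suc i" using ok i unfolding okab_def by auto
    have e: "st a b (Suc i) + int (a!Suc i - b!i + j) = st a b i + int j"
      using ba by (simp add: st_def)
    have "T (i, st a b i + int j) < T (Suc i, st a b i + int j)"
      using TT i j ba e[symmetric] by (auto simp: cells_iff)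
    moreover have k: "a!Suc i - b!i + j < a!Suc i" using j ba by simp
    moreover have "Phi a b T ! Suc i ! (a!Suc i - b!i + j) = T (Suc i, st a b (Suc i) + int (a!Suc i - b!i + j))"
      by (rule Phi_nth[OF _ k]) (use i in simp)
    moreover have "length (Phi a b T ! Suc i) = a!Suc i" using i by (simp add: Phi_len)
    moreover have "Phi a b T ! i ! j = T (i, st a b i + int j)" using i j ba by (simp add: Phi_nth)
    ultimately show "Phi a b T ! i ! j < Phi a b T ! Suc i ! (length (Phi a b T ! Suc i) - b ! i + j)"
      by (simp only: e)
  qed
  show ?thesis unfolding WS_def using rows comp by (simp add: Phi_len)
qed

lemma Psi_in: "(i,j) \<in> cells a b \<Longrightarrow> Psi a b ws (i,j) = ws!i!nat (j - st a b i)"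
  by (simp add: Psi_def)

lemma Psi_adj:
  assumes ws: "ws \<in> WS n a b" and ok: "okab a b"
    and c1: "(i,j) \<in> cells a b" and c2: "(Suc i,j) \<in> cells a b"
  shows "Psi a b ws (i,j) < Psi a b ws (Suc i, j)"
proof -
  have i: "Suc i < length a" using c2 by (simp add: cells_iff)
  have ba: "b!i \<le> a!i" "b!i \<le> a!Suc i" using ok i unfolding okab_def by auto
  have comp: "compat (ws!i) (ws!Suc i) (b!i)" using ws i unfolding WS_def by auto
  have len: "length (ws!Suc i) = a!Suc i" using ws i unfolding WS_def Row_def by auto
  define t where "t = nat (j - st a b i)"
  have jt: "j = st a b i + int t" using c1 unfolding t_def by (simp add: cells_iff)
  have "j < st a b (Suc i) + int (a!Suc i)" using c2 by (simp add: cells_iff)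
  then have tb: "t < b!i" using jt ba by (simp add: st_def)
  have e: "j - st a b (Suc i) = int (a!Suc i - b!i + t)" using jt ba by (simp add: st_def)
  have "ws!i!t < ws!Suc i!(a!Suc i - b!i + t)" using comp tb len unfolding compat_def by auto
  moreover have "Psi a b ws (i,j) = ws!i!t" using c1 by (simp add: Psi_in t_def)
  moreover have "Psi a b ws (Suc i,j) = ws!Suc i!(a!Suc i - b!i + t)" using c2 e by (simp only: Psi_in nat_int)
  ultimately show ?thesis by simp
qed

lemma cells_between:
  assumes ok: "okab a b" and c1: "(i,j) \<in> cells a b" and c2: "(i',j) \<in> cells a b"
    and ii: "i \<le> k" "k \<le> i'"
  shows "(k,j) \<in> cells a b"
proof -
  have i': "i' < length a" using c2 by (simp add: cells_iff)
  have m1: "rend a b i' \<le> rend a b k" using rend_mono[OF ok ii(2) i'] by simp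
  have m2: "st a b k \<le> st a b i" using rend_mono[OF ok ii(1)] ii i' by simp
  show ?thesis using c1 c2 m1 m2 ii i' by (auto simp: cells_iff st_def)
qed

lemma Psi_col:
  assumes ws: "ws \<in> WS n a b" and ok: "okab a b"
  shows "(i,j) \<in> cells a b \<Longrightarrow> (i',j) \<in> cells a b \<Longrightarrow> i < i' \<Longrightarrow> Psi a b ws (i,j) < Psi a b ws (i', j)"
proof (induction i')
  case 0 then show ?case by simp
next
  case (Suc k)
  show ?case
  proof (cases "i = k")
    case True then show ?thesis using Psi_adj[OF ws ok] Suc.prems by simp
  next
    case False
    then have ik: "i < k" using Suc.prems by simp
    have kc: "(k,j) \<in> cells a b" using cells_between[OF ok Suc.prems(1) Suc.prems(2)] ik by simp
    have "Psi a b ws (i,j) < Psi a b ws (k,j)" using Suc.IH[OF Suc.prems(1) kc ik] .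
    also have "\<dots> < Psi a b ws (Suc k, j)" using Psi_adj[OF ws ok kc Suc.prems(2)] .
    finally show ?thesis .
  qed
qed

lemma Psi_ssyt:
  assumes ws: "ws \<in> WS n a b" and ok: "okab a b"
  shows "Psi a b ws \<in> ssyt n (cells a b)"
  unfolding ssyt_iff
proof (intro conjI allI impI ballI)
  fix c assume c: "c \<in> cells a b"
  obtain i j where cij: "c = (i,j)" by (cases c)
  have i: "i < length a" and t: "nat (j - st a b i) < a!i" using c cij by (auto simp: cells_iff)
  have "ws!i \<in> Row n (a!i)" using ws i unfolding WS_def by auto
  then show "Psi a b ws c < n" using c cij t by (simp add: Psi_in Row_nth_bound)
next
  fix c assume "c \<notin> cells a b" then show "Psi a b ws c = 0" by (cases c) (simp add: Psi_def)
next
  fix i j j' assume h: "(i, j) \<in> cells a b \<and> (i, j') \<in> cells a b \<and> j < j'"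
  have i: "i < length a" using h by (simp add: cells_iff)
  have r: "ws!i \<in> Row n (a!i)" using ws i unfolding WS_def by auto
  have "ws!i!nat (j - st a b i) \<le> ws!i!nat (j' - st a b i)"
    using r h by (intro sorted_nth_mono) (auto simp: Row_iff cells_iff)
  then show "Psi a b ws (i, j) \<le> Psi a b ws (i, j')" using h by (simp add: Psi_in)
next
  fix i i' j assume h: "(i, j) \<in> cells a b \<and> (i', j) \<in> cells a b \<and> i < i'"
  then show "Psi a b ws (i, j) < Psi a b ws (i', j)" using Psi_col[OF ws ok] by blast
qed

lemma Psi_Phi: assumes T: "T \<in> ssyt n (cells a b)" shows "Psi a b (Phi a b T) = T"
proof (rule ext)
  fix c :: "nat \<times> int"
  obtain i j where cij: "c = (i,j)" by (cases c)
  show "Psi a b (Phi a b T) c = T c"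
  proof (cases "c \<in> cells a b")
    case True
    then have i: "i < length a" and t: "nat (j - st a b i) < a!i" and j: "st a b i \<le> j"
      using cij by (auto simp: cells_iff)
    show ?thesis using True cij i t j by (simp add: Psi_in Phi_nth)
  next
    case False then show ?thesis using T cij by (simp add: Psi_def ssyt_iff)
  qed
qed

lemma Phi_Psi: "ws \<in> WS n a b \<Longrightarrow> Phi a b (Psi a b ws) = ws"
proof -
  assume ws: "ws \<in> WS n a b"
  have l: "length ws = length a" using ws by (simp add: WS_def)
  have li: "length (ws!i) = a!i" if "i < length a" for i using ws that unfolding WS_def Row_def by auto
  show ?thesis
  proof (rule nth_equalityI)
    show "length (Phi a b (Psi a b ws)) = length ws" using l by (simp add: Phi_len)
    fix i assume i: "i < length (Phi a b (Psi a b ws))"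
    then have i': "i < length a" by (simp add: Phi_len)
    show "Phi a b (Psi a b ws) ! i = ws ! i"
    proof (rule nth_equalityI)
      show "length (Phi a b (Psi a b ws) ! i) = length (ws ! i)" using i' li by (simp add: Phi_len)
      fix t assume t: "t < length (Phi a b (Psi a b ws) ! i)"
      then have t': "t < a!i" using i' by (simp add: Phi_len)
      have "(i, st a b i + int t) \<in> cells a b" using i' t' by (simp add: cells_iff)
      then show "Phi a b (Psi a b ws) ! i ! t = ws ! i ! t" using i' t' by (simp add: Phi_nth Psi_in)
    qed
  qed
qed

lemma cells_Sigma: "cells a b = Sigma {..<length a} (\<lambda>i. (\<lambda>t. st a b i + int t) ` {..<a!i})"
proof (rule set_eqI)
  fix c :: "nat \<times> int"
  obtain i j where cij: "c = (i,j)" by (cases c)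
  have "j \<in> (\<lambda>t. st a b i + int t) ` {..<a!i} \<longleftrightarrow> st a b i \<le> j \<and> j < st a b i + int (a!i)"
  proof
    assume "st a b i \<le> j \<and> j < st a b i + int (a!i)"
    then show "j \<in> (\<lambda>t. st a b i + int t) ` {..<a!i}"
      by (intro image_eqI[of _ _ "nat (j - st a b i)"]) auto
  qed auto
  then show "c \<in> cells a b \<longleftrightarrow> c \<in> Sigma {..<length a} (\<lambda>i. (\<lambda>t. st a b i + int t) ` {..<a!i})"
    using cij by (auto simp: cells_iff)
qed

lemma pl_upt: "prod_list (map f [0..<k]) = (\<Prod>i<k. f i)"
  by (simp add: prod.distinct_set_conv_list[symmetric] atLeast0LessThan)

lemma weight_Phi:
  "(\<Prod>c\<in>cells a b. y (T c)) = wtl y (Phi a b T)"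
proof -
  have "(\<Prod>c\<in>cells a b. y (T c)) = (\<Prod>i<length a. \<Prod>j\<in>(\<lambda>t. st a b i + int t) ` {..<a!i}. y (T (i,j)))"
    unfolding cells_Sigma by (subst prod.Sigma) (auto simp: case_prod_beta)
  also have "\<dots> = (\<Prod>i<length a. \<Prod>t<a!i. y (T (i, st a b i + int t)))"
    by (intro prod.cong refl, subst prod.reindex) (auto simp: inj_on_def)
  also have "\<dots> = wtl y (Phi a b T)"
    unfolding wtl_def Phi_def wt_def
    by (simp add: map_map comp_def pl_upt)
  finally show ?thesis .
qed

lemma rep:
  assumes ok: "okab a b"
  shows "skew_schur n y a b = (\<Sum>ws\<in>WS n a b. wtl y ws)"
  unfolding skew_schur_def
proof (rule sum.reindex_bij_witness[where j="Phi a b" and i="Psi a b"])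
  fix T assume "T \<in> ssyt n (cells a b)"
  then show "Psi a b (Phi a b T) = T" "Phi a b T \<in> WS n a b" "wtl y (Phi a b T) = (\<Prod>c\<in>cells a b. y (T c))"
    using Psi_Phi Phi_WS[OF _ ok] weight_Phi[symmetric] by auto
next
  fix ws assume "ws \<in> WS n a b"
  then show "Phi a b (Psi a b ws) = ws" "Psi a b ws \<in> ssyt n (cells a b)"
    using Phi_Psi Psi_ssyt[OF _ ok] by auto
qed



lemma finite_WS: "finite (WS n a b)"
proof -

  have "WS n a b \<subseteq> {ws. set ws \<subseteq> (\<Union>k\<in>set a. Row n k) \<and> length ws = length a}"
    by (auto simp: WS_def in_set_conv_nth) (metis nth_mem)
  moreover have "finite (\<Union>k\<in>set a. Row n k)" using finite_Row by auto
  ultimately show ?thesis using finite_lists_length_eq finite_subset by blast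
qed

lemma WS_nil: "WS n [] b = {[]}"
  by (auto simp: WS_def)

lemma WS_single_sum: "(\<Sum>u\<in>WS n [k] b. g u) = (\<Sum>w\<in>Row n k. g [w])"
proof -
  have "WS n [k] b = (\<lambda>w. [w]) ` Row n k"
  proof (rule set_eqI)
    fix ws show "ws \<in> WS n [k] b \<longleftrightarrow> ws \<in> (\<lambda>w. [w]) ` Row n k"
      by (cases ws) (auto simp: WS_def)
  qed
  then show ?thesis by (simp add: sum.reindex inj_on_def)
qed

lemma WS_cong_b: "(\<And>i. Suc i < length a \<Longrightarrow> b!i = b'!i) \<Longrightarrow> WS n a b = WS n a b'"
  unfolding WS_def by auto

definition connc :: "nat \<Rightarrow> nat list list \<Rightarrow> nat list list \<Rightarrow> bool" where
  "connc c u v = (u \<noteq> [] \<longrightarrow> v \<noteq> [] \<longrightarrow> compat (last u) (hd v) c)"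

lemma WS_append_iff:
  assumes lb: "length b1 = length a1"
  shows "ws \<in> WS n (a1@a2) (b1@b2) \<longleftrightarrow>
     take (length a1) ws \<in> WS n a1 b1 \<and> drop (length a1) ws \<in> WS n a2 b2
     \<and> connc (last b1) (take (length a1) ws) (drop (length a1) ws) \<and> length ws = length a1 + length a2"
proof -
  let ?L = "length a1"
  show ?thesis
  proof
    assume ws: "ws \<in> WS n (a1@a2) (b1@b2)"
    have len: "length ws = ?L + length a2" using ws by (simp add: WS_def)
    have rows: "\<And>i. i < ?L + length a2 \<Longrightarrow> ws!i \<in> Row n ((a1@a2)!i)" using ws by (simp add: WS_def)
    have cp: "\<And>i. Suc i < ?L + length a2 \<Longrightarrow> compat (ws!i) (ws!Suc i) ((b1@b2)!i)" using ws by (simp add: WS_def)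
    have t: "take ?L ws \<in> WS n a1 b1"
      unfolding WS_def
    proof (intro CollectI conjI allI impI)
      show "length (take ?L ws) = ?L" using len by simp
      fix i assume i: "i < ?L"
      show "take ?L ws ! i \<in> Row n (a1 ! i)" using rows[of i] i by (simp add: nth_append)
    next
      fix i assume i: "Suc i < ?L"
      show "compat (take ?L ws ! i) (take ?L ws ! Suc i) (b1 ! i)"
        using cp[of i] i lb by (simp add: nth_append)
    qed
    have d: "drop ?L ws \<in> WS n a2 b2"
      unfolding WS_def
    proof (intro CollectI conjI allI impI)
      show "length (drop ?L ws) = length a2" using len by simp
      fix i assume i: "i < length a2"
      show "drop ?L ws ! i \<in> Row n (a2 ! i)" using rows[of "?L + i"] i len by (simp add: nth_append)
    next
      fix i assume i: "Suc i < length a2"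
      show "compat (drop ?L ws ! i) (drop ?L ws ! Suc i) (b2 ! i)"
        using cp[of "?L + i"] i lb len by (simp add: nth_append)
    qed
    have c: "connc (last b1) (take ?L ws) (drop ?L ws)"
      unfolding connc_def
    proof (intro impI)
      assume ne1: "take ?L ws \<noteq> []" and ne2: "drop ?L ws \<noteq> []"
      then have L0: "0 < ?L" and L2: "0 < length a2" using len by auto
      have "compat (ws!(?L - 1)) (ws!Suc (?L - 1)) ((b1@b2)!(?L - 1))" using cp[of "?L - 1"] L0 L2 by simp
      moreover have "last (take ?L ws) = ws!(?L - 1)" using L0 len by (simp add: last_take_nth)
      moreover have "hd (drop ?L ws) = ws!?L" using L2 len by (simp add: hd_drop_conv_nth)
      moreover have "b1 \<noteq> []" using L0 lb by auto
      then have "(b1@b2)!(?L - 1) = last b1" using L0 lb by (simp add: nth_append last_conv_nth)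
      ultimately show "compat (last (take ?L ws)) (hd (drop ?L ws)) (last b1)" using L0 by simp
    qed
    show "take ?L ws \<in> WS n a1 b1 \<and> drop ?L ws \<in> WS n a2 b2 \<and> connc (last b1) (take ?L ws) (drop ?L ws)
        \<and> length ws = ?L + length a2" using t d c len by simp
  next
    assume h: "take ?L ws \<in> WS n a1 b1 \<and> drop ?L ws \<in> WS n a2 b2 \<and> connc (last b1) (take ?L ws) (drop ?L ws)
        \<and> length ws = ?L + length a2"
    then have len: "length ws = ?L + length a2" and t: "take ?L ws \<in> WS n a1 b1" and d: "drop ?L ws \<in> WS n a2 b2"
      and c: "connc (last b1) (take ?L ws) (drop ?L ws)" by auto
    show "ws \<in> WS n (a1@a2) (b1@b2)"
      unfolding WS_def
    proof (intro CollectI conjI allI impI)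
      show "length ws = length (a1 @ a2)" using len by simp
      fix i assume i: "i < length (a1 @ a2)"
      show "ws ! i \<in> Row n ((a1 @ a2) ! i)"
      proof (cases "i < ?L")
        case True then show ?thesis using t by (auto simp: WS_def nth_append)
      next
        case False
        then have "drop ?L ws ! (i - ?L) \<in> Row n (a2 ! (i - ?L))" using d i by (auto simp: WS_def)
        then show ?thesis using False len by (simp add: nth_append)
      qed
    next
      fix i assume i: "Suc i < length (a1 @ a2)"
      show "compat (ws ! i) (ws ! Suc i) ((b1 @ b2) ! i)"
      proof (cases "Suc i < ?L")
        case True then show ?thesis using t lb by (auto simp: WS_def nth_append)
      next
        case False
        show ?thesis
        proof (cases "Suc i = ?L")
          case True
          have ne1: "take ?L ws \<noteq> []" and ne2: "drop ?L ws \<noteq> []" using True i len by auto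
          have "compat (last (take ?L ws)) (hd (drop ?L ws)) (last b1)" using c ne1 ne2 by (simp add: connc_def)
          moreover have "last (take ?L ws) = ws!i" using len last_take_nth[of "Suc i" ws] by (simp add: True[symmetric])
          moreover have "hd (drop ?L ws) = ws!Suc i" using True i len by (simp add: hd_drop_conv_nth)
          moreover have "b1 \<noteq> []" using True lb by auto
          then have "(b1@b2)!i = last b1" using True lb
            by (simp add: nth_append last_conv_nth True[symmetric])
          ultimately show ?thesis by simp
        next
          case False2: False
          then have iL: "?L \<le> i" using False by simp
          have "compat (drop ?L ws ! (i - ?L)) (drop ?L ws ! Suc (i - ?L)) (b2 ! (i - ?L))"
            using d i iL by (auto simp: WS_def)
          moreover have "Suc (i - ?L) = Suc i - ?L" using iL by simp
          ultimately show ?thesis using iL len lb i by (simp add: nth_append)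
        qed
      qed
    qed
  qed
qed

lemma WS_append_sum:
  assumes lb: "length b1 = length a1"
  shows "(\<Sum>ws\<in>WS n (a1@a2) (b1@b2). f ws)
     = (\<Sum>u\<in>WS n a1 b1. \<Sum>v\<in>WS n a2 b2. if connc (last b1) u v then f (u@v) else 0)"
proof -
  have "(\<Sum>u\<in>WS n a1 b1. \<Sum>v\<in>WS n a2 b2. if connc (last b1) u v then f (u@v) else 0)
      = (\<Sum>p\<in>{(u,v). u\<in>WS n a1 b1 \<and> v\<in>WS n a2 b2 \<and> connc (last b1) u v}. f (fst p @ snd p))"
    by (rule dsum_pairs[OF finite_WS finite_WS])
  also have "\<dots> = (\<Sum>ws\<in>WS n (a1@a2) (b1@b2). f ws)"
  proof (rule sum.reindex_bij_witness[where j="\<lambda>p. fst p @ snd p" and i="\<lambda>ws. (take (length a1) ws, drop (length a1) ws)"])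
    fix p assume p: "p \<in> {(u,v). u\<in>WS n a1 b1 \<and> v\<in>WS n a2 b2 \<and> connc (last b1) u v}"
    then have lu: "length (fst p) = length a1" by (auto simp: WS_def)
    then show "(take (length a1) (fst p @ snd p), drop (length a1) (fst p @ snd p)) = p" by simp
    have lv: "length (snd p) = length a2" using p by (auto simp: WS_def)
    show "fst p @ snd p \<in> WS n (a1 @ a2) (b1 @ b2)"
      unfolding WS_append_iff[OF lb] using p lu lv by auto
  next
    fix ws assume ws: "ws \<in> WS n (a1 @ a2) (b1 @ b2)"
    show "fst (take (length a1) ws, drop (length a1) ws) @ snd (take (length a1) ws, drop (length a1) ws) = ws" by simp
    show "(take (length a1) ws, drop (length a1) ws) \<in> {(u,v). u\<in>WS n a1 b1 \<and> v\<in>WS n a2 b2 \<and> connc (last b1) u v}"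
      using ws unfolding WS_append_iff[OF lb] by auto
  qed simp
  finally show ?thesis by simp
qed

lemma last_single: "last [x] = x" by simp

lemma cons_sum:
  assumes lb: "length b = length a2"
  shows "(\<Sum>v\<in>WS n ([k]@a2) b. h v) = (\<Sum>Q\<in>Row n k. \<Sum>L\<in>WS n a2 (tl b). if connc (hd (b@[0])) [Q] L then h (Q#L) else 0)"
proof -
  have "WS n ([k]@a2) b = WS n ([k]@a2) ([hd (b@[0])] @ tl b)"
  proof (rule WS_cong_b)
    fix i assume i: "Suc i < length ([k]@a2)"
    show "b ! i = ([hd (b @ [0])] @ tl b) ! i"
      using i lb by (cases b; cases i) auto
  qed
  then have "(\<Sum>v\<in>WS n ([k]@a2) b. h v) = (\<Sum>u\<in>WS n [k] [hd (b@[0])]. \<Sum>L\<in>WS n a2 (tl b). if connc (last [hd (b@[0])]) u L then h (u@L) else 0)"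
    using WS_append_sum[where ?b1.0="[hd (b@[0])]" and ?a1.0="[k]" and n=n and ?a2.0=a2 and ?b2.0="tl b" and f=h] by simp
  also have "\<dots> = (\<Sum>Q\<in>Row n k. \<Sum>L\<in>WS n a2 (tl b). if connc (hd (b@[0])) [Q] L then h (Q#L) else 0)"
    unfolding WS_single_sum last_single by (simp only: append.simps)
  finally show ?thesis .
qed

lemma pattern:
  assumes ls: "length sb = length sig" and lt: "length tb = length tau"
  shows "(\<Sum>ws\<in>WS n (sig@[k1,k2]@tau) (sb@[x]@tb). f ws) =
    (\<Sum>U\<in>WS n sig sb. \<Sum>P\<in>Row n k1. \<Sum>Q\<in>Row n k2. \<Sum>L\<in>WS n tau (tl tb).
      if connc (last sb) U [P] \<and> compat P Q x \<and> connc (hd tb) [Q] L then f (U@[P,Q]@L) else 0)"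
proof -
  have e1: "sig@[k1,k2]@tau = sig @ ([k1] @ ([k2] @ tau))" by simp
  have e2: "sb@[x]@tb = sb @ ([x] @ tb)" by simp
  have "(\<Sum>ws\<in>WS n (sig@[k1,k2]@tau) (sb@[x]@tb). f ws)
     = (\<Sum>U\<in>WS n sig sb. \<Sum>v\<in>WS n ([k1] @ ([k2] @ tau)) ([x] @ tb). if connc (last sb) U v then f (U@v) else 0)"
    unfolding e1 by (rule WS_append_sum[OF ls])
  also have "\<dots> = (\<Sum>U\<in>WS n sig sb. \<Sum>P\<in>Row n k1. \<Sum>v2\<in>WS n ([k2] @ tau) tb.
       if connc x [P] v2 then (if connc (last sb) U (P#v2) then f (U@P#v2) else 0) else 0)"
  proof (rule sum.cong[OF refl])
    fix U
    show "(\<Sum>v\<in>WS n ([k1] @ ([k2] @ tau)) ([x] @ tb). if connc (last sb) U v then f (U@v) else 0)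
      = (\<Sum>P\<in>Row n k1. \<Sum>v2\<in>WS n ([k2] @ tau) tb.
       if connc x [P] v2 then (if connc (last sb) U (P#v2) then f (U@P#v2) else 0) else 0)"
    proof -
      have "(\<Sum>v\<in>WS n ([k1] @ ([k2] @ tau)) ([x] @ tb). if connc (last sb) U v then f (U@v) else 0)
        = (\<Sum>u\<in>WS n [k1] [x]. \<Sum>v2\<in>WS n ([k2] @ tau) tb. if connc (last [x]) u v2 then
            (if connc (last sb) U (u@v2) then f (U@(u@v2)) else 0) else 0)"
        by (rule WS_append_sum) simp
      also have "\<dots> = (\<Sum>P\<in>Row n k1. \<Sum>v2\<in>WS n ([k2] @ tau) tb.
       if connc x [P] v2 then (if connc (last sb) U (P#v2) then f (U@P#v2) else 0) else 0)"
        unfolding WS_single_sum last_single by (simp only: append.simps)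
      finally show ?thesis .
    qed
  qed
  also have "\<dots> = (\<Sum>U\<in>WS n sig sb. \<Sum>P\<in>Row n k1. \<Sum>Q\<in>Row n k2. \<Sum>L\<in>WS n tau (tl tb).
      if connc (last sb) U [P] \<and> compat P Q x \<and> connc (hd tb) [Q] L then f (U@[P,Q]@L) else 0)"
  proof (intro sum.cong[OF refl])
    fix U P
    have c3: "connc (hd (tb@[0])) [Q] L = connc (hd tb) [Q] L" if "L \<in> WS n tau (tl tb)" for Q L
    proof (cases "L = []")
      case True then show ?thesis by (simp add: connc_def)
    next
      case False
      then have "tau \<noteq> []" using that by (auto simp: WS_def)
      then have "tb \<noteq> []" using lt by auto
      then show ?thesis by simp
    qed
    show "(\<Sum>v2\<in>WS n ([k2] @ tau) tb. if connc x [P] v2 then (if connc (last sb) U (P#v2) then f (U@P#v2) else 0) else 0)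
      = (\<Sum>Q\<in>Row n k2. \<Sum>L\<in>WS n tau (tl tb).
      if connc (last sb) U [P] \<and> compat P Q x \<and> connc (hd tb) [Q] L then f (U@[P,Q]@L) else 0)"
      apply (subst cons_sum[where b=tb and ?a2.0=tau and n=n and k=k2, OF lt])
      apply (intro sum.cong refl)
      apply (simp only: c3)
      apply (auto simp: connc_def)
      done
  qed
  finally show ?thesis .
qed



definition lo :: "nat list list \<Rightarrow> nat" where
  "lo U = (if U = [] then 0 else Suc (hd (last U)))"

definition hi :: "nat \<Rightarrow> nat list list \<Rightarrow> nat" where
  "hi n L = (if L = [] then n else last (hd L))"

lemma compat1: "r \<noteq> [] \<Longrightarrow> P \<noteq> [] \<Longrightarrow> compat r P (Suc 0) = (hd r < last P)"
  by (simp add: compat_def hd_conv_nth last_conv_nth)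

lemma WS_last_row: "U \<in> WS n sig sb \<Longrightarrow> U \<noteq> [] \<Longrightarrow> last U \<in> Row n (last sig) \<and> sig \<noteq> []"
proof -
  assume U: "U \<in> WS n sig sb" and ne: "U \<noteq> []"
  have l: "length U = length sig" using U by (simp add: WS_def)
  then have "sig \<noteq> []" using ne by auto
  moreover have "U!(length U - 1) \<in> Row n (sig!(length sig - 1))"
  proof -
    have "\<forall>i<length sig. U!i \<in> Row n (sig!i)" using U by (simp add: WS_def)
    moreover have "length sig - 1 < length sig" using \<open>sig \<noteq> []\<close> by simp
    ultimately show ?thesis using l by simp
  qed
  ultimately show ?thesis using ne l by (simp add: last_conv_nth)
qed

lemma WS_hd_row: "L \<in> WS n tau tb \<Longrightarrow> L \<noteq> [] \<Longrightarrow> hd L \<in> Row n (hd tau) \<and> tau \<noteq> []"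
proof -
  assume L: "L \<in> WS n tau tb" and ne: "L \<noteq> []"
  have l: "length L = length tau" using L by (simp add: WS_def)
  then have "tau \<noteq> []" using ne by auto
  moreover have "L!0 \<in> Row n (tau!0)"
  proof -
    have "\<forall>i<length tau. L!i \<in> Row n (tau!i)" using L by (simp add: WS_def)
    then show ?thesis using \<open>tau \<noteq> []\<close> by simp
  qed
  ultimately show ?thesis using ne l by (simp add: hd_conv_nth)
qed

lemma lo_conn:
  assumes U: "U \<in> WS n sig sb" and s1: "\<forall>k\<in>set sig. k \<ge> 1" and ls: "sig \<noteq> [] \<Longrightarrow> last sb = 1"
    and P: "P \<noteq> []"
  shows "connc (last sb) U [P] = (lo U \<le> last P)"
proof (cases "U = []")
  case True then show ?thesis by (simp add: connc_def lo_def)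
next
  case False
  have r: "last U \<in> Row n (last sig)" and sn: "sig \<noteq> []" using WS_last_row[OF U False] by auto
  have "last sig \<ge> 1" using s1 sn by simp
  then have "last U \<noteq> []" using r by (auto simp: Row_iff)
  then show ?thesis using False P ls[OF sn] by (simp add: connc_def lo_def compat1 Suc_le_eq)
qed

lemma hi_conn:
  assumes L: "L \<in> WS n tau tb'" and t1: "\<forall>k\<in>set tau. k \<ge> 1" and ht: "tau \<noteq> [] \<Longrightarrow> c = 1"
    and Q: "Q \<in> Row n k" and k: "1 \<le> k"
  shows "connc c [Q] L = (hd Q < hi n L)"
proof (cases "L = []")
  case True then show ?thesis using Row_hd_bound[OF Q k] by (simp add: connc_def hi_def)
next
  case False
  have r: "hd L \<in> Row n (hd tau)" and tn: "tau \<noteq> []" using WS_hd_row[OF L False] by auto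
  have "hd tau \<ge> 1" using t1 tn by simp
  then have "hd L \<noteq> []" using r by (auto simp: Row_iff)
  moreover have "Q \<noteq> []" using Q k by (auto simp: Row_iff)
  ultimately show ?thesis using False ht[OF tn] by (simp add: connc_def hi_def compat1)
qed

lemma wtl_append[simp]: "wtl y (xs @ ys) = wtl y xs * wtl y ys"
  by (simp add: wtl_def)

lemma wtl_Cons[simp]: "wtl y (x # xs) = wt y x * wtl y xs"
  by (simp add: wtl_def)

lemma wtl_Nil[simp]: "wtl y [] = 1"
  by (simp add: wtl_def)

lemma swap3: "(\<Sum>a\<in>A. \<Sum>b\<in>B. \<Sum>c\<in>C. f a b c) = (\<Sum>c\<in>C. \<Sum>a\<in>A. \<Sum>b\<in>B. f a b c)"
proof -
  have "(\<Sum>a\<in>A. \<Sum>b\<in>B. \<Sum>c\<in>C. f a b c) = (\<Sum>a\<in>A. \<Sum>c\<in>C. \<Sum>b\<in>B. f a b c)"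
    by (rule sum.cong[OF refl], rule sum.swap)
  also have "\<dots> = (\<Sum>c\<in>C. \<Sum>a\<in>A. \<Sum>b\<in>B. f a b c)" by (rule sum.swap)
  finally show ?thesis .
qed

lemma S_assembly:
  fixes y :: "nat \<Rightarrow> 'a::comm_ring_1"
  assumes ls: "length sb = length sig" and lt: "length tb = length tau"
    and s1: "\<forall>k\<in>set sig. k \<ge> 1" and t1: "\<forall>k\<in>set tau. k \<ge> 1"
    and lsb: "sig \<noteq> [] \<Longrightarrow> last sb = 1" and htb: "tau \<noteq> [] \<Longrightarrow> hd tb = 1"
    and k1: "1 \<le> k1" and k2: "1 \<le> k2"
  shows "(\<Sum>ws\<in>WS n (sig@[k1,k2]@tau) (sb@[x]@tb). wtl y ws) =
    (\<Sum>U\<in>WS n sig sb. \<Sum>L\<in>WS n tau (tl tb). wtl y U * wtl y L *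
      (\<Sum>P\<in>Row n k1. \<Sum>Q\<in>Row n k2. if lo U \<le> last P \<and> compat P Q x \<and> hd Q < hi n L then wt y P * wt y Q else 0))"
  unfolding pattern[OF ls lt]
proof (rule sum.cong[OF refl])
  fix U assume U: "U \<in> WS n sig sb"
  have "(\<Sum>P\<in>Row n k1. \<Sum>Q\<in>Row n k2. \<Sum>L\<in>WS n tau (tl tb).
      if connc (last sb) U [P] \<and> compat P Q x \<and> connc (hd tb) [Q] L then wtl y (U@[P,Q]@L) else 0)
    = (\<Sum>L\<in>WS n tau (tl tb). \<Sum>P\<in>Row n k1. \<Sum>Q\<in>Row n k2.
      if connc (last sb) U [P] \<and> compat P Q x \<and> connc (hd tb) [Q] L then wtl y (U@[P,Q]@L) else 0)"
    by (rule swap3)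
  also have "\<dots> = (\<Sum>L\<in>WS n tau (tl tb). wtl y U * wtl y L *
      (\<Sum>P\<in>Row n k1. \<Sum>Q\<in>Row n k2. if lo U \<le> last P \<and> compat P Q x \<and> hd Q < hi n L then wt y P * wt y Q else 0))"
  proof (rule sum.cong[OF refl])
    fix L assume L: "L \<in> WS n tau (tl tb)"
    show "(\<Sum>P\<in>Row n k1. \<Sum>Q\<in>Row n k2.
      if connc (last sb) U [P] \<and> compat P Q x \<and> connc (hd tb) [Q] L then wtl y (U@[P,Q]@L) else 0)
      = wtl y U * wtl y L *
      (\<Sum>P\<in>Row n k1. \<Sum>Q\<in>Row n k2. if lo U \<le> last P \<and> compat P Q x \<and> hd Q < hi n L then wt y P * wt y Q else 0)"
      unfolding sum_distrib_left
    proof (intro sum.cong refl)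
      fix P Q assume P: "P \<in> Row n k1" and Q: "Q \<in> Row n k2"
      have Pne: "P \<noteq> []" using P k1 by (auto simp: Row_iff)
      have c1: "connc (last sb) U [P] = (lo U \<le> last P)" by (rule lo_conn[OF U s1 lsb Pne])
      have c2: "connc (hd tb) [Q] L = (hd Q < hi n L)" by (rule hi_conn[OF L t1 htb Q k2])
      show "(if connc (last sb) U [P] \<and> compat P Q x \<and> connc (hd tb) [Q] L then wtl y (U@[P,Q]@L) else 0)
        = wtl y U * wtl y L * (if lo U \<le> last P \<and> compat P Q x \<and> hd Q < hi n L then wt y P * wt y Q else 0)"
        unfolding c1 c2 by (simp add: ac_simps)
    qed
  qed
  finally show "(\<Sum>P\<in>Row n k1. \<Sum>Q\<in>Row n k2. \<Sum>L\<in>WS n tau (tl tb).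
      if connc (last sb) U [P] \<and> compat P Q x \<and> connc (hd tb) [Q] L then wtl y (U@[P,Q]@L) else 0)
    = (\<Sum>L\<in>WS n tau (tl tb). wtl y U * wtl y L *
      (\<Sum>P\<in>Row n k1. \<Sum>Q\<in>Row n k2. if lo U \<le> last P \<and> compat P Q x \<and> hd Q < hi n L then wt y P * wt y Q else 0))" .
qed

lemma compat_app_right: "c \<le> length R \<Longrightarrow> compat r (E @ R) c = compat r R c"
proof -
  assume c: "c \<le> length R"
  have "\<And>j. (E@R)!(length (E@R) - c + j) = R!(length R - c + j)"
  proof -
    fix j
    have "length (E@R) - c + j = length E + (length R - c + j)" using c by simp
    then show "(E@R)!(length (E@R) - c + j) = R!(length R - c + j)" by (simp only: nth_append_length_plus)
  qed
  then show ?thesis unfolding compat_def by simp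
qed

lemma compat_app_left: "c \<le> length A \<Longrightarrow> compat (A @ B) r c = compat A r c"
  unfolding compat_def by (simp add: nth_append)

lemma all_less_Suc: "(\<forall>j<Suc m. Pr j) = (Pr 0 \<and> (\<forall>j<m. Pr (Suc j)))"
  by (auto simp: less_Suc_eq_0_disj)

lemma all_less_Suc': "(\<forall>j<Suc m. Pr j) = ((\<forall>j<m. Pr j) \<and> Pr m)"
  by (auto simp: less_Suc_eq)

lemma compat_split1:
  assumes lE: "length E = m" and lR: "R \<noteq> []" and lP: "length P = Suc m"
  shows "compat (E @ R) P (Suc m) = ((\<forall>j<m. E!j < P!j) \<and> hd R < last P)"
proof -
  have "compat (E @ R) P (Suc m) = (\<forall>j<Suc m. (E@R)!j < P!j)"
    unfolding compat_def using lP by simp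
  also have "\<dots> = ((\<forall>j<m. (E@R)!j < P!j) \<and> (E@R)!m < P!m)" by (rule all_less_Suc')
  also have "\<dots> = ((\<forall>j<m. E!j < P!j) \<and> hd R < last P)"
  proof -
    have "last P = P!m" using lP by (subst last_conv_nth) auto
    moreover have "(E@R)!m = hd R" using lE lR by (simp add: nth_append hd_conv_nth)
    moreover have "\<forall>j<m. (E@R)!j = E!j" using lE by (simp add: nth_append)
    ultimately show ?thesis by simp
  qed
  finally show ?thesis .
qed

lemma compat_split2:
  assumes lP: "length P = Suc m" and lL: "Lh \<noteq> []" and lX: "length X = m"
  shows "compat P (Lh @ X) (Suc m) = (hd P < last Lh \<and> (\<forall>j<m. P!(Suc j) < X!j))"
proof -
  have "compat P (Lh @ X) (Suc m) = (\<forall>j<Suc m. P!j < (Lh@X)!(length Lh - 1 + j))"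
    unfolding compat_def using lX lL by (simp add: add.commute)
  also have "\<dots> = (P!0 < (Lh@X)!(length Lh - 1 + 0) \<and> (\<forall>j<m. P!(Suc j) < (Lh@X)!(length Lh - 1 + Suc j)))"
    by (rule all_less_Suc)
  also have "\<dots> = (hd P < last Lh \<and> (\<forall>j<m. P!(Suc j) < X!j))"
  proof -
    have "hd P = P!0" using lP by (subst hd_conv_nth) auto
    moreover have "(Lh@X)!(length Lh - 1 + 0) = last Lh" using lL by (simp add: nth_append last_conv_nth)
    moreover have "\<forall>j. (Lh@X)!(length Lh - 1 + Suc j) = X!j"
    proof
      fix j
      have "length Lh - 1 + Suc j = length Lh + j" using lL by (cases Lh) auto
      then show "(Lh@X)!(length Lh - 1 + Suc j) = X!j" by (simp only: nth_append_length_plus)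
    qed
    ultimately show ?thesis by simp
  qed
  finally show ?thesis .
qed

definition connr :: "nat list \<Rightarrow> nat list \<Rightarrow> bool" where
  "connr A B = (A \<noteq> [] \<longrightarrow> B \<noteq> [] \<longrightarrow> last A \<le> hd B)"

lemma Row_append_sum:
  "(\<Sum>N\<in>Row n (k1+k2). g N) = (\<Sum>A\<in>Row n k1. \<Sum>B\<in>Row n k2. if connr A B then g (A@B) else 0)"
proof -
  have "(\<Sum>A\<in>Row n k1. \<Sum>B\<in>Row n k2. if connr A B then g (A@B) else 0)
      = (\<Sum>p\<in>{(A,B). A\<in>Row n k1 \<and> B\<in>Row n k2 \<and> connr A B}. g (fst p @ snd p))"
    by (rule dsum_pairs[OF finite_Row finite_Row])
  also have "\<dots> = (\<Sum>N\<in>Row n (k1+k2). g N)"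
  proof (rule sum.reindex_bij_witness[where j="\<lambda>p. fst p @ snd p" and i="\<lambda>N. (take k1 N, drop k1 N)"])
    fix p assume p: "p \<in> {(A,B). A\<in>Row n k1 \<and> B\<in>Row n k2 \<and> connr A B}"
    then obtain A B where pAB: "p = (A,B)" and A: "A \<in> Row n k1" and B: "B \<in> Row n k2" and c: "connr A B" by auto
    have lA: "length A = k1" using A by (simp add: Row_iff)
    show "(take k1 (fst p @ snd p), drop k1 (fst p @ snd p)) = p" using pAB lA by simp
    have "sorted (A @ B)" using A B c by (intro sorted_app) (auto simp: Row_iff connr_def)
    then show "fst p @ snd p \<in> Row n (k1 + k2)" using pAB A B by (auto simp: Row_iff)
  next
    fix N assume N: "N \<in> Row n (k1 + k2)"
    show "fst (take k1 N, drop k1 N) @ snd (take k1 N, drop k1 N) = N" by simp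
    have lN: "length N = k1 + k2" and sN: "sorted N" and bN: "\<forall>v\<in>set N. v < n" using N by (auto simp: Row_iff)
    have "sorted (take k1 N @ drop k1 N)" using sN by simp
    then have st: "sorted (take k1 N)" "sorted (drop k1 N)" and
      cr: "\<forall>u\<in>set (take k1 N). \<forall>v\<in>set (drop k1 N). u \<le> v"
      unfolding sorted_append by auto
    have "connr (take k1 N) (drop k1 N)" unfolding connr_def using cr by auto
    then show "(take k1 N, drop k1 N) \<in> {(A,B). A\<in>Row n k1 \<and> B\<in>Row n k2 \<and> connr A B}"
      using st lN bN by (auto simp: Row_iff dest: in_set_takeD in_set_dropD)
  qed simp
  finally show ?thesis by simp
qed

lemma if_sum: "(if c then sum f A else 0) = (\<Sum>a\<in>A. if c then f a else 0)"
  by simp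

lemma R2_assembly:
  fixes y :: "nat \<Rightarrow> 'a::comm_ring_1"
  assumes ls: "length sb = length sig" and lt: "length tb = length tau"
    and s1: "\<forall>k\<in>set sig. k \<ge> 1" and t1: "\<forall>k\<in>set tau. k \<ge> 1"
    and lsb: "sig \<noteq> [] \<Longrightarrow> last sb = 1" and tn: "tau \<noteq> []"
    and tbc: "\<forall>i. 0 < i \<and> i < length tau \<longrightarrow> tb ! i \<le> min (tau ! i) (tau ! (i - 1))"
    and m: "1 \<le> m"
  shows "(\<Sum>ws\<in>WS n (sig@[m+1, m + hd tau]@tl tau) (sb@[m+1]@tl tb). wtl y ws) =
    (\<Sum>U\<in>WS n sig sb. \<Sum>L\<in>WS n tau (tl tb). wtl y U * wtl y L * G2 n y m (lo U) (hi n L))"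
proof -
  have lt': "length (tl tb) = length (tl tau)" using lt by simp
  have htau: "hd tau \<ge> 1" using t1 tn by simp
  have tau_eq: "tau = [hd tau] @ tl tau" using tn by simp
  let ?c = "hd (tl tb)"
  let ?cz = "hd (tl tb @ [0])"
  show ?thesis
    unfolding pattern[OF ls lt']
    apply (rule sum.cong[OF refl])
    subgoal premises prems for U
    proof -
    have U: "U \<in> WS n sig sb" using prems .
    let ?F = "\<lambda>P N L'. if connc (last sb) U [P] \<and> compat P N (m + 1) \<and> connc ?c [N] L' then wtl y (U @ [P, N] @ L') else 0"
    have "(\<Sum>P\<in>Row n (m+1). \<Sum>N\<in>Row n (m + hd tau). \<Sum>L'\<in>WS n (tl tau) (tl (tl tb)). ?F P N L')
      = (\<Sum>P\<in>Row n (m+1). \<Sum>Lh\<in>Row n (hd tau). \<Sum>X\<in>Row n m. \<Sum>L'\<in>WS n (tl tau) (tl (tl tb)).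
           if connr Lh X then ?F P (Lh @ X) L' else 0)"
    proof (rule sum.cong[OF refl])
      fix P
      have "m + hd tau = hd tau + m" by simp
      then show "(\<Sum>N\<in>Row n (m + hd tau). \<Sum>L'\<in>WS n (tl tau) (tl (tl tb)). ?F P N L')
        = (\<Sum>Lh\<in>Row n (hd tau). \<Sum>X\<in>Row n m. \<Sum>L'\<in>WS n (tl tau) (tl (tl tb)).
           if connr Lh X then ?F P (Lh @ X) L' else 0)"
        by (simp only: Row_append_sum if_sum)
    qed
    also have "\<dots> = (\<Sum>Lh\<in>Row n (hd tau). \<Sum>P\<in>Row n (m+1). \<Sum>X\<in>Row n m. \<Sum>L'\<in>WS n (tl tau) (tl (tl tb)).
           if connr Lh X then ?F P (Lh @ X) L' else 0)"
      by (rule sum.swap)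
    also have "\<dots> = (\<Sum>Lh\<in>Row n (hd tau). \<Sum>L'\<in>WS n (tl tau) (tl (tl tb)). \<Sum>P\<in>Row n (m+1). \<Sum>X\<in>Row n m.
           if connr Lh X then ?F P (Lh @ X) L' else 0)"
      by (rule sum.cong[OF refl], rule swap3)
    also have "\<dots> = (\<Sum>Lh\<in>Row n (hd tau). \<Sum>L'\<in>WS n (tl tau) (tl (tl tb)).
        if connc ?cz [Lh] L' then wtl y U * wtl y (Lh # L') * G2 n y m (lo U) (hi n (Lh # L')) else 0)"
    proof (intro sum.cong refl)
      fix Lh L' assume Lh: "Lh \<in> Row n (hd tau)" and L': "L' \<in> WS n (tl tau) (tl (tl tb))"
      have Lhne: "Lh \<noteq> []" using Lh htau by (auto simp: Row_iff)
      have hiL: "hi n (Lh # L') = last Lh" by (simp add: hi_def)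
      have cc: "connc ?c [Lh @ X] L' = connc ?cz [Lh] L'" for X
      proof (cases "L' = []")
        case True then show ?thesis by (simp add: connc_def)
      next
        case False
        moreover have "length L' = length (tl tau)" using L' by (simp add: WS_def)
        ultimately have "tl tau \<noteq> []" by (metis length_0_conv)
        then have l2: "1 < length tau" using tn by (cases tau) auto
        then have "tl tb \<noteq> []" using lt by (cases tb) auto
        then have c0: "?cz = ?c" by simp
        have "?c = tb ! 1" using \<open>tl tb \<noteq> []\<close> by (cases tb) (auto simp: hd_conv_nth nth_append)
        also have "\<dots> \<le> tau ! 0" using tbc l2 by force
        also have "\<dots> = length Lh" using Lh tn by (simp add: Row_iff hd_conv_nth)
        finally have "?c \<le> length Lh" .
        then show ?thesis using False c0 by (simp add: connc_def compat_app_left)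
      qed
      show "(\<Sum>P\<in>Row n (m+1). \<Sum>X\<in>Row n m. if connr Lh X then ?F P (Lh @ X) L' else 0)
        = (if connc ?cz [Lh] L' then wtl y U * wtl y (Lh # L') * G2 n y m (lo U) (hi n (Lh # L')) else 0)"
        unfolding G2_def if_sum sum_distrib_left
      proof (intro sum.cong refl)
        fix P X assume P: "P \<in> Row n (m+1)" and X: "X \<in> Row n m"
        have Pne: "P \<noteq> []" and lP: "length P = Suc m" using P by (auto simp: Row_iff)
        have Xne: "X \<noteq> []" and lX: "length X = m" using X m by (auto simp: Row_iff)
        have c1: "connc (last sb) U [P] = (lo U \<le> last P)" by (rule lo_conn[OF U s1 lsb Pne])
        have c2: "compat P (Lh @ X) (m + 1) = (hd P < last Lh \<and> (\<forall>j<m. P!(Suc j) < X!j))"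
          using compat_split2[OF lP Lhne lX] by simp
        have c3: "connr Lh X = (last Lh \<le> hd X)" using Lhne Xne by (simp add: connr_def)
        show "(if connr Lh X then ?F P (Lh @ X) L' else 0)
          = (if connc ?cz [Lh] L' then wtl y U * wtl y (Lh # L') *
             (if hi n (Lh # L') \<le> hd X \<and> (\<forall>j<m. P ! Suc j < X ! j) \<and> lo U \<le> last P \<and> hd P < hi n (Lh # L')
              then wt y P * wt y X else 0) else 0)"
          unfolding c1 c2 c3 cc hiL by (auto simp: ac_simps)
      qed
    qed
    also have "\<dots> = (\<Sum>L\<in>WS n tau (tl tb). wtl y U * wtl y L * G2 n y m (lo U) (hi n L))"
      by (subst tau_eq, subst cons_sum[OF lt']) simp
    finally have FIN: "(\<Sum>P\<in>Row n (m+1). \<Sum>N\<in>Row n (m + hd tau). \<Sum>L'\<in>WS n (tl tau) (tl (tl tb)). ?F P N L')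
      = (\<Sum>L\<in>WS n tau (tl tb). wtl y U * wtl y L * G2 n y m (lo U) (hi n L))" .
    from FIN show ?thesis by (simp only:)
  qed
  done
qed

lemma R1_assembly:
  fixes y :: "nat \<Rightarrow> 'a::comm_ring_1"
  assumes ls: "length sb = length sig" and lt: "length tb = length tau"
    and s1: "\<forall>k\<in>set sig. k \<ge> 1" and t1: "\<forall>k\<in>set tau. k \<ge> 1"
    and sn: "sig \<noteq> []" and htb: "tau \<noteq> [] \<Longrightarrow> hd tb = 1"
    and sbc: "\<forall>i. Suc i < length sig \<longrightarrow> sb ! i \<le> min (sig ! i) (sig ! Suc i)"
    and m: "1 \<le> m"
  shows "(\<Sum>ws\<in>WS n (butlast sig @ [m + last sig, m+1] @ tau) (butlast sb @ [m+1] @ tb). wtl y ws) =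
    (\<Sum>U\<in>WS n sig sb. \<Sum>L\<in>WS n tau (tl tb). wtl y U * wtl y L * G1 n y m (lo U) (hi n L))"
proof -
  have ls': "length (butlast sb) = length (butlast sig)" using ls by simp
  have hsig: "last sig \<ge> 1" using s1 sn by simp
  have sig_eq: "sig = butlast sig @ [last sig]" using sn by simp
  have sbne: "sb \<noteq> []" using ls sn by auto
  have sb_eq: "sb = butlast sb @ [last sb]" using sbne by simp
  let ?c = "last (butlast sb)"
  have rhs: "(\<Sum>U\<in>WS n sig sb. \<Sum>L\<in>WS n tau (tl tb). wtl y U * wtl y L * G1 n y m (lo U) (hi n L))
     = (\<Sum>U'\<in>WS n (butlast sig) (butlast sb). \<Sum>R\<in>Row n (last sig).
         if connc ?c U' [R] then (\<Sum>L\<in>WS n tau (tl tb). wtl y (U' @ [R]) * wtl y L * G1 n y m (lo (U' @ [R])) (hi n L)) else 0)"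
  proof -
    have "WS n sig sb = WS n (butlast sig @ [last sig]) (butlast sb @ [last sb])"
      using sig_eq sb_eq by simp
    then show ?thesis
      by (simp only: WS_append_sum[OF ls'] WS_single_sum)
  qed
  show ?thesis
    unfolding pattern[OF ls' lt] rhs
  proof (rule sum.cong[OF refl])
    fix U' assume U': "U' \<in> WS n (butlast sig) (butlast sb)"
    let ?F = "\<lambda>M P L. if connc ?c U' [M] \<and> compat M P (m + 1) \<and> connc (hd tb) [P] L then wtl y (U' @ [M, P] @ L) else 0"
    have cc: "connc ?c U' [E @ R] = connc ?c U' [R]" if R: "R \<in> Row n (last sig)" for E R
    proof (cases "U' = []")
      case True then show ?thesis by (simp add: connc_def)
    next
      case False
      have "length U' = length (butlast sig)" using U' by (simp add: WS_def)
      then have l2: "1 < length sig" using False by (cases sig) auto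
      have bne: "butlast sb \<noteq> []" using l2 ls by (cases sb) auto
      have "?c = butlast sb ! (length (butlast sb) - 1)" by (rule last_conv_nth[OF bne])
      also have "\<dots> = sb ! (length sig - 2)" using l2 ls
        by (simp add: nth_butlast numeral_2_eq_2)
      finally have "?c = sb ! (length sig - 2)" .
      then have "?c = sb ! (length sig - 2)" .
      also have "\<dots> \<le> sig ! (length sig - 1)"
      proof -
        have k1: "Suc (length sig - 2) < length sig" and k2: "Suc (length sig - 2) = length sig - 1" using l2 by auto
        have "sb ! (length sig - 2) \<le> min (sig ! (length sig - 2)) (sig ! Suc (length sig - 2))"
          using sbc k1 by blast
        then show ?thesis using k2 by simp
      qed
      also have "\<dots> = length R" using R sn by (simp add: Row_iff last_conv_nth)
      finally have "?c \<le> length R" .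
      then show ?thesis using False by (simp add: connc_def compat_app_right)
    qed
    have "(\<Sum>M\<in>Row n (m + last sig). \<Sum>P\<in>Row n (m+1). \<Sum>L\<in>WS n tau (tl tb). ?F M P L)
      = (\<Sum>E\<in>Row n m. \<Sum>R\<in>Row n (last sig). \<Sum>P\<in>Row n (m+1). \<Sum>L\<in>WS n tau (tl tb).
           if connr E R then ?F (E @ R) P L else 0)"
      by (subst Row_append_sum[where n=n and ?k1.0=m and ?k2.0="last sig"]) (simp only: if_sum)
    also have "\<dots> = (\<Sum>R\<in>Row n (last sig). \<Sum>E\<in>Row n m. \<Sum>P\<in>Row n (m+1). \<Sum>L\<in>WS n tau (tl tb).
           if connr E R then ?F (E @ R) P L else 0)"
      by (rule sum.swap)
    also have "\<dots> = (\<Sum>R\<in>Row n (last sig). \<Sum>L\<in>WS n tau (tl tb). \<Sum>E\<in>Row n m. \<Sum>P\<in>Row n (m+1).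
           if connr E R then ?F (E @ R) P L else 0)"
      by (rule sum.cong[OF refl], rule swap3)
    also have "\<dots> = (\<Sum>R\<in>Row n (last sig).
         if connc ?c U' [R] then (\<Sum>L\<in>WS n tau (tl tb). wtl y (U' @ [R]) * wtl y L * G1 n y m (lo (U' @ [R])) (hi n L)) else 0)"
    proof (rule sum.cong[OF refl])
      fix R assume R: "R \<in> Row n (last sig)"
      have Rne: "R \<noteq> []" using R hsig by (auto simp: Row_iff)
      have loR: "lo (U' @ [R]) = Suc (hd R)" by (simp add: lo_def)
      show "(\<Sum>L\<in>WS n tau (tl tb). \<Sum>E\<in>Row n m. \<Sum>P\<in>Row n (m+1). if connr E R then ?F (E @ R) P L else 0)
        = (if connc ?c U' [R] then (\<Sum>L\<in>WS n tau (tl tb). wtl y (U' @ [R]) * wtl y L * G1 n y m (lo (U' @ [R])) (hi n L)) else 0)"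
        unfolding G1_def if_sum sum_distrib_left
      proof (intro sum.cong refl)
        fix L E P assume L: "L \<in> WS n tau (tl tb)" and E: "E \<in> Row n m" and P: "P \<in> Row n (m+1)"
        have Ene: "E \<noteq> []" and lE: "length E = m" using E m by (auto simp: Row_iff)
        have lP: "length P = Suc m" using P by (simp add: Row_iff)
        have c1: "connr E R = (last E < lo (U' @ [R]))" using Ene Rne loR by (simp add: connr_def less_Suc_eq_le)
        have c2: "compat (E @ R) P (m + 1) = ((\<forall>j<m. E!j < P!j) \<and> lo (U' @ [R]) \<le> last P)"
          using compat_split1[OF lE Rne lP] loR by (simp add: Suc_le_eq)
        have k1: "(1::nat) \<le> m + 1" by simp
        have c3: "connc (hd tb) [P] L = (hd P < hi n L)" by (rule hi_conn[OF L t1 htb P k1])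
        show "(if connr E R then ?F (E @ R) P L else 0)
          = (if connc ?c U' [R] then wtl y (U' @ [R]) * wtl y L *
             (if last E < lo (U' @ [R]) \<and> (\<forall>j<m. E ! j < P ! j) \<and> lo (U' @ [R]) \<le> last P \<and> hd P < hi n L
              then wt y E * wt y P else 0) else 0)"
          unfolding c1 c2 c3 cc[OF R] by (auto simp: ac_simps)
      qed
    qed
    finally show "(\<Sum>M\<in>Row n (m + last sig). \<Sum>P\<in>Row n (m+1). \<Sum>L\<in>WS n tau (tl tb). ?F M P L)
      = (\<Sum>R\<in>Row n (last sig).
         if connc ?c U' [R] then (\<Sum>L\<in>WS n tau (tl tb). wtl y (U' @ [R]) * wtl y L * G1 n y m (lo (U' @ [R])) (hi n L)) else 0)" .
  qed
qed



lemma okab_append: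
  assumes lb: "length b1 = length a1" and o1: "okab a1 b1" and o2: "okab a2 b2"
    and j: "a1 \<noteq> [] \<Longrightarrow> a2 \<noteq> [] \<Longrightarrow> last b1 \<le> last a1 \<and> last b1 \<le> hd a2"
  shows "okab (a1@a2) (b1@b2)"
  unfolding okab_def
proof (intro allI impI)
  fix i assume i: "Suc i < length (a1 @ a2)"
  let ?L = "length a1"
  show "(b1 @ b2) ! i \<le> (a1 @ a2) ! i \<and> (b1 @ b2) ! i \<le> (a1 @ a2) ! Suc i"
  proof (cases "Suc i < ?L")
    case True then show ?thesis using o1 lb by (simp add: okab_def nth_append)
  next
    case False
    show ?thesis
    proof (cases "Suc i = ?L")
      case True
      have a1ne: "a1 \<noteq> []" and a2ne: "a2 \<noteq> []" using True i by auto
      have b1ne: "b1 \<noteq> []" using a1ne lb by auto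
      have "(b1@b2)!i = last b1" using True lb b1ne by (simp add: nth_append last_conv_nth True[symmetric])
      moreover have "(a1@a2)!i = last a1" using True a1ne by (simp add: nth_append last_conv_nth True[symmetric])
      moreover have "(a1@a2)!Suc i = hd a2" using True a2ne by (simp add: nth_append hd_conv_nth)
      ultimately show ?thesis using j[OF a1ne a2ne] by simp
    next
      case False2: False
      then have iL: "?L \<le> i" using False by simp
      have "Suc (i - ?L) < length a2" using i iL by simp
      then have "b2 ! (i - ?L) \<le> a2 ! (i - ?L) \<and> b2 ! (i - ?L) \<le> a2 ! Suc (i - ?L)"
        using o2 by (simp add: okab_def)
      moreover have "Suc (i - ?L) = Suc i - ?L" using iL by simp
      ultimately show ?thesis using iL lb by (simp add: nth_append)
    qed
  qed
qed

lemma okab_single: "okab [k] b" by (simp add: okab_def)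
lemma okab_nil: "okab [] b" by (simp add: okab_def)

lemma okab_cong: "(\<And>i. Suc i < length a \<Longrightarrow> b!i = b'!i) \<Longrightarrow> okab a b = okab a b'"
  by (simp add: okab_def)

lemma okab_pattern:
  assumes ls: "length sb = length sig" and lt: "length tb = length tau"
    and os: "okab sig sb" and ot: "okab tau (tl tb)"
    and js: "sig \<noteq> [] \<Longrightarrow> last sb \<le> last sig \<and> last sb \<le> k1"
    and x1: "x \<le> k1" and x2: "x \<le> k2"
    and jt: "tau \<noteq> [] \<Longrightarrow> hd tb \<le> k2 \<and> hd tb \<le> hd tau"
  shows "okab (sig@[k1,k2]@tau) (sb@[x]@tb)"
proof -
  have e1: "sig@[k1,k2]@tau = sig @ ([k1] @ ([k2] @ tau))" by simp
  have o3: "okab ([k2] @ tau) tb"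
  proof -
    have hh: "tau \<noteq> [] \<Longrightarrow> hd (tb@[0]) = hd tb" using lt by (cases tb) auto
    have "okab ([k2] @ tau) ([hd (tb@[0])] @ tl tb)"
      using okab_single ot jt hh by (intro okab_append) auto
    moreover have "okab ([k2] @ tau) tb = okab ([k2] @ tau) ([hd (tb@[0])] @ tl tb)"
      by (rule okab_cong) (use lt in \<open>cases tb; auto simp: nth_Cons split: nat.splits\<close>)
    ultimately show ?thesis by simp
  qed
  have o4: "okab ([k1] @ ([k2] @ tau)) ([x] @ tb)"
    using okab_single o3 x1 x2 by (intro okab_append) auto
  show ?thesis unfolding e1
    using os o4 js by (intro okab_append[OF ls]) auto
qed

lemma G1_zero: "G1 n y m 0 h = 0"
  by (simp add: G1_def)

lemma G2_zero:
  assumes m: "1 \<le> m"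
  shows "G2 n y m l n = 0"
  unfolding G2_def
proof (intro sum.neutral ballI)
  fix P X assume X: "X \<in> Row n m"
  have "hd X < n" using Row_hd_bound[OF X m] .
  then show "(if n \<le> hd X \<and> (\<forall>j<m. P ! Suc j < X ! j) \<and> l \<le> last P \<and> hd P < n then wt y P * wt y X else 0) = 0"
    by simp
qed

lemma okab_tl: "length a \<le> Suc (length b) \<Longrightarrow> okab a b \<Longrightarrow> okab (tl a) (tl b)"
  unfolding okab_def
proof (intro allI impI)
  fix i assume l: "length a \<le> Suc (length b)" and o: "\<forall>i. Suc i < length a \<longrightarrow> b ! i \<le> a ! i \<and> b ! i \<le> a ! Suc i"
    and i: "Suc i < length (tl a)"
  have "Suc (Suc i) < length a" using i by simp
  then have "b ! Suc i \<le> a ! Suc i \<and> b ! Suc i \<le> a ! Suc (Suc i)" using o by blast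
  moreover have "tl b ! i = b ! Suc i" "tl a ! i = a ! Suc i" "tl a ! Suc i = a ! Suc (Suc i)"
    using i l by (simp_all add: nth_tl)
  ultimately show "tl b ! i \<le> tl a ! i \<and> tl b ! i \<le> tl a ! Suc i" by simp
qed

lemma WS_nil_sum: "(\<Sum>U\<in>WS n [] b. f U) = f []"
  by (simp add: WS_nil)

theorem corollary2p7:
  fixes sigma tau sb tb :: "nat list" and m x n :: nat and y :: "nat \<Rightarrow> 'a::comm_ring_1"
  assumes "\<forall>k\<in>set sigma. k \<ge> 1" and "\<forall>k\<in>set tau. k \<ge> 1"
    and "length sb = length sigma" and "length tb = length tau"
    and "sigma \<noteq> [] \<Longrightarrow> last sb = 1"
    and "tau \<noteq> [] \<Longrightarrow> hd tb = 1"
    and "\<forall>i. Suc i < length sigma \<longrightarrow> sb ! i \<le> min (sigma ! i) (sigma ! Suc i)"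
    and "\<forall>i. 0 < i \<and> i < length tau \<longrightarrow> tb ! i \<le> min (tau ! i) (tau ! (i - 1))"
    and "m \<ge> 1" and "x \<le> m"
  shows "skew_schur n y (sigma @ [m, m + 1] @ tau) (sb @ [x] @ tb)
       - skew_schur n y (sigma @ [m + 1, m] @ tau) (sb @ [x] @ tb)
     = (if sigma = [] then 0
        else - skew_schur n y (butlast sigma @ [m + last sigma, m + 1] @ tau) (butlast sb @ [m + 1] @ tb))
     + (if tau = [] then 0
        else skew_schur n y (sigma @ [m + 1, m + hd tau] @ tl tau) (sb @ [m + 1] @ tl tb))"
proof -
  note s1 = assms(1) and t1 = assms(2) and ls = assms(3) and lt = assms(4) and lsb = assms(5)
    and htb = assms(6) and sbc = assms(7) and tbc = assms(8) and m = assms(9) and x = assms(10)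
  have osig: "okab sigma sb" using sbc by (simp add: okab_def)
  have otau: "okab tau (tl tb)" unfolding okab_def
  proof (intro allI impI)
    fix i assume i: "Suc i < length tau"
    have "tb ! Suc i \<le> min (tau ! Suc i) (tau ! i)" using tbc i by (metis diff_Suc_1 zero_less_Suc)
    moreover have "tl tb ! i = tb ! Suc i" using i lt by (simp add: nth_tl)
    ultimately show "tl tb ! i \<le> tau ! i \<and> tl tb ! i \<le> tau ! Suc i" by simp
  qed
  have jsS: "last sb \<le> last sigma \<and> last sb \<le> k" if "sigma \<noteq> []" "1 \<le> k" for k
    using lsb s1 that by simp
  have jtS: "hd tb \<le> k \<and> hd tb \<le> hd tau" if "tau \<noteq> []" "1 \<le> k" for k
    using htb t1 that by simp
  let ?A = "\<lambda>G. (\<Sum>U\<in>WS n sigma sb. \<Sum>L\<in>WS n tau (tl tb). wtl y U * wtl y L * G (lo U) (hi n L))"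
  have S1: "skew_schur n y (sigma @ [m, m + 1] @ tau) (sb @ [x] @ tb) = ?A (F1 n y m x)"
  proof -
    have ok: "okab (sigma @ [m, m + 1] @ tau) (sb @ [x] @ tb)"
      using ls lt osig otau jsS[of m] jtS[of "m+1"] x m by (intro okab_pattern) auto
    have k2: "1 \<le> m + 1" by simp
    have "(\<Sum>ws\<in>WS n (sigma@[m,m+1]@tau) (sb@[x]@tb). wtl y ws) = (\<Sum>U\<in>WS n sigma sb. \<Sum>L\<in>WS n tau (tl tb). wtl y U * wtl y L *
      (\<Sum>P\<in>Row n m. \<Sum>Q\<in>Row n (m+1). if lo U \<le> last P \<and> compat P Q x \<and> hd Q < hi n L then wt y P * wt y Q else 0))"
      by (rule S_assembly[OF ls lt s1 t1 lsb htb m k2])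
    then show ?thesis unfolding rep[OF ok] by (simp only: F1_def)
  qed
  have S2: "skew_schur n y (sigma @ [m + 1, m] @ tau) (sb @ [x] @ tb) = ?A (F2 n y m x)"
  proof -
    have ok: "okab (sigma @ [m + 1, m] @ tau) (sb @ [x] @ tb)"
      using ls lt osig otau jsS[of "m+1"] jtS[of m] x m by (intro okab_pattern) auto
    have k1: "1 \<le> m + 1" by simp
    have "(\<Sum>ws\<in>WS n (sigma@[m+1,m]@tau) (sb@[x]@tb). wtl y ws) = (\<Sum>U\<in>WS n sigma sb. \<Sum>L\<in>WS n tau (tl tb). wtl y U * wtl y L *
      (\<Sum>P\<in>Row n (m+1). \<Sum>Q\<in>Row n m. if lo U \<le> last P \<and> compat P Q x \<and> hd Q < hi n L then wt y P * wt y Q else 0))"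
      by (rule S_assembly[OF ls lt s1 t1 lsb htb k1 m])
    then show ?thesis unfolding rep[OF ok] by (simp only: F2_def)
  qed
  have A1: "?A (G1 n y m) = (if sigma = [] then 0
        else skew_schur n y (butlast sigma @ [m + last sigma, m + 1] @ tau) (butlast sb @ [m + 1] @ tb))"
  proof (cases "sigma = []")
    case True
    then have "sb = []" using ls by simp
    then show ?thesis using True by (simp add: WS_nil lo_def G1_zero)
  next
    case False
    have ls': "length (butlast sb) = length (butlast sigma)" using ls by simp
    have ob: "okab (butlast sigma) (butlast sb)"
      unfolding okab_def
    proof (intro allI impI)
      fix i assume i: "Suc i < length (butlast sigma)"
      then have "sb ! i \<le> sigma ! i \<and> sb ! i \<le> sigma ! Suc i" using osig by (simp add: okab_def)
      then show "butlast sb ! i \<le> butlast sigma ! i \<and> butlast sb ! i \<le> butlast sigma ! Suc i"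
        using i ls by (simp add: nth_butlast)
    qed
    have jb: "last (butlast sb) \<le> last (butlast sigma) \<and> last (butlast sb) \<le> m + last sigma"
      if bne: "butlast sigma \<noteq> []"
    proof -
      let ?k = "length sigma - 2"
      have "length (butlast sigma) \<noteq> 0" using bne by (simp only: length_0_conv) simp
      then have g2: "2 \<le> length sigma" by simp
      have l2: "Suc ?k < length sigma" "Suc ?k = length sigma - 1" using g2 by arith+
      have bsb: "butlast sb \<noteq> []" using bne ls by (metis length_0_conv length_butlast)
      have "sb ! ?k \<le> sigma ! ?k \<and> sb ! ?k \<le> sigma ! Suc ?k" using osig l2(1) unfolding okab_def by blast
      moreover have "last (butlast sb) = sb ! ?k" using bsb ls l2 by (simp add: last_conv_nth nth_butlast numeral_2_eq_2)
      moreover have "last (butlast sigma) = sigma ! ?k" using bne l2 by (simp add: last_conv_nth nth_butlast numeral_2_eq_2)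
      moreover have "last sigma = sigma ! Suc ?k" using False l2 by (simp add: last_conv_nth numeral_2_eq_2)
      ultimately show ?thesis by simp
    qed
    have hs: "last sigma \<ge> 1" using s1 False by simp
    have ok: "okab (butlast sigma @ [m + last sigma, m + 1] @ tau) (butlast sb @ [m + 1] @ tb)"
      using ls' lt ob otau jb jtS[of "m+1"] hs by (intro okab_pattern) auto
    have "skew_schur n y (butlast sigma @ [m + last sigma, m + 1] @ tau) (butlast sb @ [m + 1] @ tb) = ?A (G1 n y m)"
      using rep[OF ok] R1_assembly[OF ls lt s1 t1 False htb sbc m] by (rule trans)
    then show ?thesis using False by simp
  qed
  have A2: "?A (G2 n y m) = (if tau = [] then 0
        else skew_schur n y (sigma @ [m + 1, m + hd tau] @ tl tau) (sb @ [m + 1] @ tl tb))"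
  proof (cases "tau = []")
    case True
    then show ?thesis using True m by (simp add: WS_nil hi_def G2_zero)
  next
    case False
    have lt': "length (tl tb) = length (tl tau)" using lt by simp
    have ot: "okab (tl tau) (tl (tl tb))" using okab_tl[OF _ otau] lt by simp
    have ht: "hd tau \<ge> 1" using t1 False by simp
    have jt: "hd (tl tb) \<le> m + hd tau \<and> hd (tl tb) \<le> hd (tl tau)" if tne: "tl tau \<noteq> []"
    proof -
      have l2: "Suc 0 < length tau" using tne False by (cases tau) auto
      have "tl tb ! 0 \<le> tau ! 0 \<and> tl tb ! 0 \<le> tau ! Suc 0" using otau l2 by (simp add: okab_def)
      moreover have "tl tb \<noteq> []" using l2 lt by (cases tb) auto
      then have "hd (tl tb) = tl tb ! 0" by (rule hd_conv_nth)
      moreover have "hd tau = tau ! 0" using False by (simp add: hd_conv_nth)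
      moreover have "hd (tl tau) = tau ! Suc 0" using l2 tne by (cases tau) (auto simp: hd_conv_nth)
      ultimately show ?thesis by simp
    qed
    have ok: "okab (sigma @ [m + 1, m + hd tau] @ tl tau) (sb @ [m + 1] @ tl tb)"
      using ls lt' osig ot jsS[of "m+1"] jt ht by (intro okab_pattern) auto
    have "skew_schur n y (sigma @ [m + 1, m + hd tau] @ tl tau) (sb @ [m + 1] @ tl tb) = ?A (G2 n y m)"
      using rep[OF ok] R2_assembly[OF ls lt s1 t1 lsb False tbc m] by (rule trans)
    then show ?thesis using False by simp
  qed
  have "?A (F1 n y m x) - ?A (F2 n y m x) = ?A (G2 n y m) - ?A (G1 n y m)"
  proof -
    have "?A (F1 n y m x) - ?A (F2 n y m x) = (\<Sum>U\<in>WS n sigma sb. \<Sum>L\<in>WS n tau (tl tb).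
        wtl y U * wtl y L * (F1 n y m x (lo U) (hi n L) - F2 n y m x (lo U) (hi n L)))"
      by (simp add: sum_subtractf[symmetric] right_diff_distrib)
    also have "\<dots> = (\<Sum>U\<in>WS n sigma sb. \<Sum>L\<in>WS n tau (tl tb).
        wtl y U * wtl y L * (G2 n y m (lo U) (hi n L) - G1 n y m (lo U) (hi n L)))"
      by (simp only: local_identity[OF m x])
    also have "\<dots> = ?A (G2 n y m) - ?A (G1 n y m)"
      by (simp add: sum_subtractf[symmetric] right_diff_distrib)
    finally show ?thesis .
  qed
  then have eq: "skew_schur n y (sigma @ [m, m + 1] @ tau) (sb @ [x] @ tb)
       - skew_schur n y (sigma @ [m + 1, m] @ tau) (sb @ [x] @ tb) = ?A (G2 n y m) - ?A (G1 n y m)"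
    unfolding S1 S2 .
  have B1: "(if sigma = [] then 0
        else - skew_schur n y (butlast sigma @ [m + last sigma, m + 1] @ tau) (butlast sb @ [m + 1] @ tb))
     = - ?A (G1 n y m)"
    unfolding A1 by simp
  show ?thesis unfolding eq B1 A2[symmetric] by simp
qed


end
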